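(* Let $n\ge1$ and let $\lambda=(a_1,\ldots,a_l\mid b_1,\ldots,b_l)$ (Frobenius notation) be a modified balanced partition of size $n$. Then the number of $T\in\mathrm{TSPP}_{n-1}$ with $\pi(T)=\lambda$ equals \[ \det_{1\le i,j\le l}\binom{b_j-1}{a_i}. \]
   Context: For a partition $\lambda$ with conjugate $\lambda'$ and Durfee square side $l=\max\{i:\lambda_i\ge i\}$, its Frobenius notation is $(\lambda_1-1,\ldots,\lambda_l-l\mid \lambda'_1-1,\ldots,\lambda'_l-l)$. A modified balanced partition of size $n$ is a partition $\lambda=(\lambda_1,\ldots,\lambda_n)$ with $n$ parts, zero parts allowed, such that $\lambda_1\le n-1$ and $\lambda_i<\lambda'_i$ whenever $\lambda_i\ge i$ (equivalently, in Frobenius notation $(a_1,\ldots,a_l\mid b_1,\ldots,b_l)$, $a_i<b_i$ for all $i$). A plane partition inside an $(m,m,m)$-box is an array $(T_{i,j})_{1\le i,j\le m}$ of integers in $\{0,\ldots,m\}$ weakly decreasing along rows and columns; equivalently the set $\{(i,j,k):k\le T_{i,j}\}\subseteq\{1,\ldots,m\}^3$. It is totally symmetric if this set is invariant under all permutations of coordinates; $\mathrm{TSPP}_m$ denotes the set of these. For $T\in\mathrm{TSPP}_{n-1}$, $\mathrm{diag}(T)$ is the conjugate of the partition $(T_{1,1},\ldots,T_{n-1,n-1})$; if $\mathrm{diag}(T)=(a_1,\ldots,a_l\mid b_1,\ldots,b_l)$ then $\pi(T)$ is the partition with Frobenius notation $(a_1,\ldots,a_l\mid b_1+1,\ldots,b_l+1)$.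 *)

theory Defs
  imports "Jordan_Normal_Form.Determinant"
begin

text \<open>Partitions are represented as functions lam :: nat => nat, indexed from 1,
  with lam 0 = 0 and finite support (lam i is the i-th part).\<close>

definition conj_part :: "(nat \<Rightarrow> nat) \<Rightarrow> nat \<Rightarrow> nat" where
  "conj_part lam k = (if k = 0 then 0 else card {i. 1 \<le> i \<and> k \<le> lam i})"

definition durfee :: "(nat \<Rightarrow> nat) \<Rightarrow> nat" where
  "durfee lam = Max ({0} \<union> {i. 1 \<le> i \<and> i \<le> lam i})"

text \<open>Frobenius coordinates (a_1..a_l | b_1..b_l), as lists (0-indexed).\<close>
definition frob_a :: "(nat \<Rightarrow> nat) \<Rightarrow> nat list" where
  "frob_a lam = map (\<lambda>i. lam i - i) [1..<durfee lam + 1]"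

definition frob_b :: "(nat \<Rightarrow> nat) \<Rightarrow> nat list" where
  "frob_b lam = map (\<lambda>i. conj_part lam i - i) [1..<durfee lam + 1]"

definition from_frob :: "nat list \<Rightarrow> nat list \<Rightarrow> nat \<Rightarrow> nat" where
  "from_frob a b i =
     (if i = 0 then 0
      else if i \<le> length a then a ! (i - 1) + i
      else card {j. j < length a \<and> i \<le> b ! j + (j + 1)})"

definition modified_balanced :: "nat \<Rightarrow> (nat \<Rightarrow> nat) \<Rightarrow> bool" where
  "modified_balanced n lam \<longleftrightarrow>
     (\<forall>i. (i = 0 \<or> n < i) \<longrightarrow> lam i = 0) \<and>
     (\<forall>i j. 1 \<le> i \<and> i \<le> j \<and> j \<le> n \<longrightarrow> lam j \<le> lam i) \<and>
     lam 1 \<le> n - 1 \<and>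
     (\<forall>i. 1 \<le> i \<and> i \<le> lam i \<longrightarrow> lam i < conj_part lam i)"

definition pp_cells :: "nat \<Rightarrow> (nat \<Rightarrow> nat \<Rightarrow> nat) \<Rightarrow> (nat \<times> nat \<times> nat) set" where
  "pp_cells m T = {(i, j, k). 1 \<le> i \<and> i \<le> m \<and> 1 \<le> j \<and> j \<le> m \<and> 1 \<le> k \<and> k \<le> T i j}"

definition plane_partition_box :: "nat \<Rightarrow> (nat \<Rightarrow> nat \<Rightarrow> nat) \<Rightarrow> bool" where
  "plane_partition_box m T \<longleftrightarrow>
     (\<forall>i j. \<not> (1 \<le> i \<and> i \<le> m \<and> 1 \<le> j \<and> j \<le> m) \<longrightarrow> T i j = 0) \<and>
     (\<forall>i j. T i j \<le> m) \<and>
     (\<forall>i j j'. 1 \<le> i \<and> i \<le> m \<and> 1 \<le> j \<and> j \<le> j' \<and> j' \<le> m \<longrightarrow> T i j' \<le> T i j) \<and>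
     (\<forall>i i' j. 1 \<le> i \<and> i \<le> i' \<and> i' \<le> m \<and> 1 \<le> j \<and> j \<le> m \<longrightarrow> T i' j \<le> T i j)"

definition coord_perms :: "((nat \<times> nat \<times> nat) \<Rightarrow> (nat \<times> nat \<times> nat)) set" where
  "coord_perms = {(\<lambda>(x, y, z). (x, y, z)), (\<lambda>(x, y, z). (x, z, y)), (\<lambda>(x, y, z). (y, x, z)),
                  (\<lambda>(x, y, z). (y, z, x)), (\<lambda>(x, y, z). (z, x, y)), (\<lambda>(x, y, z). (z, y, x))}"

definition TSPP :: "nat \<Rightarrow> (nat \<Rightarrow> nat \<Rightarrow> nat) set" where
  "TSPP m = {T. plane_partition_box m T \<and> (\<forall>\<sigma>\<in>coord_perms. \<sigma> ` pp_cells m T = pp_cells m T)}"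

text \<open>diag(T): conjugate of (T_11, ..., T_mm).\<close>
definition diag_tspp :: "nat \<Rightarrow> (nat \<Rightarrow> nat \<Rightarrow> nat) \<Rightarrow> nat \<Rightarrow> nat" where
  "diag_tspp m T k = (if k = 0 then 0 else card {i. 1 \<le> i \<and> i \<le> m \<and> k \<le> T i i})"

definition pi_tspp :: "nat \<Rightarrow> (nat \<Rightarrow> nat \<Rightarrow> nat) \<Rightarrow> nat \<Rightarrow> nat" where
  "pi_tspp m T = (let D = diag_tspp m T in from_frob (frob_a D) (map Suc (frob_b D)))"

end

theory Submission
  imports Defs
begin


definition paths :: "('v \<Rightarrow> 'v \<Rightarrow> bool) \<Rightarrow> 'v \<Rightarrow> 'v \<Rightarrow> 'v list set" where
  "paths E a b = {P. P \<noteq> [] \<and> hd P = a \<and> last P = b \<and> successively E P}"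

lemma first_split:
  assumes "filter Q xs \<noteq> []"
  shows "\<exists>pre post. xs = pre @ hd (filter Q xs) # post \<and> (\<forall>x\<in>set pre. \<not> Q x) \<and> Q (hd (filter Q xs))"
  using assms
proof (induction xs)
  case Nil then show ?case by simp
next
  case (Cons a xs)
  show ?case
  proof (cases "Q a")
    case True then show ?thesis by (intro exI[of _ "[]"] exI[of _ xs]) auto
  next
    case False
    with Cons obtain pre post where "xs = pre @ hd (filter Q xs) # post" "\<forall>x\<in>set pre. \<not> Q x" "Q (hd (filter Q xs))"
      by auto
    with False show ?thesis by (intro exI[of _ "a # pre"] exI[of _ post]) auto
  qed
qed

lemma tw_split: "v \<notin> set xs \<Longrightarrow> takeWhile (\<lambda>x. x \<noteq> v) (xs @ v # ys) = xs"
  by (induction xs) auto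

lemma dw_split: "v \<notin> set xs \<Longrightarrow> dropWhile (\<lambda>x. x \<noteq> v) (xs @ v # ys) = v # ys"
  by (induction xs) auto

lemma sum_involution_zero:
  fixes f :: "'a \<Rightarrow> int"
  assumes "finite X" and "\<And>x. x \<in> X \<Longrightarrow> g x \<in> X" and "\<And>x. x \<in> X \<Longrightarrow> g (g x) = x"
    and "\<And>x. x \<in> X \<Longrightarrow> f (g x) = - f x"
  shows "sum f X = 0"
proof -
  have bij: "bij_betw g X X"
    by (rule bij_betwI[where g = g]) (use assms in auto)
  have "sum f X = sum (f \<circ> g) X"
    using sum.reindex_bij_betw[OF bij, of f] by simp
  also have "\<dots> = - sum f X"
    using assms(4) by (simp add: sum_negf)
  finally show ?thesis by simp
qed

locale lgv =
  fixes E :: "'v \<Rightarrow> 'v \<Rightarrow> bool" and rk :: "'v \<Rightarrow> int"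
    and l :: nat and A B :: "nat \<Rightarrow> 'v"
  assumes rk: "\<And>u v. E u v \<Longrightarrow> rk u < rk v"
    and fin: "\<And>i j. finite (paths E i j)"
begin

lemma path_sorted: "successively E P \<Longrightarrow> sorted_wrt (\<lambda>u v. rk u < rk v) P"
proof -
  assume "successively E P"
  then have "successively (\<lambda>u v. rk u < rk v) P"
    by (induction P rule: induct_list012) (auto intro: rk)
  then show ?thesis
    by (subst successively_conv_sorted_wrt[symmetric]) (auto simp: transp_def)
qed

lemma sorted_rk_distinct: "sorted_wrt (\<lambda>u v. rk u < rk v) P \<Longrightarrow> distinct P"
  by (induction P) auto

lemma path_distinct: "successively E P \<Longrightarrow> distinct P"
  using path_sorted sorted_rk_distinct by blast

definition Fam :: "(nat \<Rightarrow> nat) \<Rightarrow> (nat \<Rightarrow> 'v list) set" where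
  "Fam \<sigma> = PiE {..<l} (\<lambda>i. paths E (A i) (B (\<sigma> i)))"

definition NI :: "(nat \<Rightarrow> nat) \<Rightarrow> (nat \<Rightarrow> 'v list) set" where
  "NI \<sigma> = {P \<in> Fam \<sigma>. \<forall>i<l. \<forall>j<l. i \<noteq> j \<longrightarrow> set (P i) \<inter> set (P j) = {}}"

definition isect :: "(nat \<Rightarrow> 'v list) \<Rightarrow> nat set" where
  "isect P = {i. i < l \<and> (\<exists>j<l. j \<noteq> i \<and> set (P i) \<inter> set (P j) \<noteq> {})}"

definition i0 :: "(nat \<Rightarrow> 'v list) \<Rightarrow> nat" where
  "i0 P = Min (isect P)"

definition oth :: "(nat \<Rightarrow> 'v list) \<Rightarrow> nat \<Rightarrow> 'v set" where
  "oth P i = (\<Union>j\<in>{j. j < l \<and> j \<noteq> i}. set (P j))"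

definition v0 :: "(nat \<Rightarrow> 'v list) \<Rightarrow> 'v" where
  "v0 P = hd (filter (\<lambda>x. x \<in> oth P (i0 P)) (P (i0 P)))"

definition j0 :: "(nat \<Rightarrow> 'v list) \<Rightarrow> nat" where
  "j0 P = Min {j. j < l \<and> j \<noteq> i0 P \<and> v0 P \<in> set (P j)}"

definition sw :: "(nat \<Rightarrow> 'v list) \<Rightarrow> (nat \<Rightarrow> 'v list)" where
  "sw P = (let i = i0 P; j = j0 P; v = v0 P in
     P(i := takeWhile (\<lambda>x. x \<noteq> v) (P i) @ dropWhile (\<lambda>x. x \<noteq> v) (P j),
       j := takeWhile (\<lambda>x. x \<noteq> v) (P j) @ dropWhile (\<lambda>x. x \<noteq> v) (P i)))"

definition iota :: "(nat \<Rightarrow> nat) \<times> (nat \<Rightarrow> 'v list) \<Rightarrow> (nat \<Rightarrow> nat) \<times> (nat \<Rightarrow> 'v list)" where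
  "iota x = (fst x \<circ> Transposition.transpose (i0 (snd x)) (j0 (snd x)), sw (snd x))"

lemma isect_not_NI:
  assumes "P \<in> Fam \<sigma>" "P \<notin> NI \<sigma>"
  shows "isect P \<noteq> {}"
  using assms unfolding NI_def isect_def by auto

lemma basic:
  assumes P: "P \<in> Fam \<sigma>" "isect P \<noteq> {}"
  defines "i \<equiv> i0 P" and "j \<equiv> j0 P" and "v \<equiv> v0 P"
  shows "i < l" "j < l" "i < j" "v \<in> set (P i)" "v \<in> set (P j)"
    "\<forall>k<i. \<forall>k'<l. k' \<noteq> k \<longrightarrow> set (P k) \<inter> set (P k') = {}"
    "\<exists>pre post. P i = pre @ v # post \<and> (\<forall>x\<in>set pre. x \<notin> oth P i)"
    "\<forall>k<j. k \<noteq> i \<longrightarrow> v \<notin> set (P k)"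
    "v \<in> oth P i"
proof -
  have fin: "finite (isect P)" unfolding isect_def by auto
  have iin: "i \<in> isect P" unfolding i_def i0_def using fin P(2) by (rule Min_in)
  then show il: "i < l" unfolding isect_def by auto
  show ismall: "\<forall>k<i. \<forall>k'<l. k' \<noteq> k \<longrightarrow> set (P k) \<inter> set (P k') = {}"
  proof (intro allI impI)
    fix k k' assume "k < i" "k' < l" "k' \<noteq> k"
    show "set (P k) \<inter> set (P k') = {}"
    proof (rule ccontr)
      assume "set (P k) \<inter> set (P k') \<noteq> {}"
      then have "k \<in> isect P" using \<open>k < i\<close> il \<open>k' < l\<close> \<open>k' \<noteq> k\<close> unfolding isect_def by auto
      then have "i \<le> k" unfolding i_def i0_def using fin by simp
      then show False using \<open>k < i\<close> by simp
    qed
  qed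
  from iin obtain k where k: "k < l" "k \<noteq> i" "set (P i) \<inter> set (P k) \<noteq> {}"
    unfolding isect_def by auto
  have ne: "filter (\<lambda>x. x \<in> oth P i) (P i) \<noteq> []"
    using k unfolding oth_def filter_empty_conv by blast
  from first_split[OF ne] obtain pre post where
    sp: "P i = pre @ v # post" "\<forall>x\<in>set pre. x \<notin> oth P i" "v \<in> oth P i"
    unfolding v_def v0_def i_def by auto
  then show "\<exists>pre post. P i = pre @ v # post \<and> (\<forall>x\<in>set pre. x \<notin> oth P i)" by blast
  show "v \<in> oth P i" by fact
  show vi: "v \<in> set (P i)" using sp by simp
  let ?J = "{j. j < l \<and> j \<noteq> i \<and> v \<in> set (P j)}"
  have Jne: "?J \<noteq> {}" using sp(3) unfolding oth_def by auto
  have Jfin: "finite ?J" by auto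
  have jin: "j \<in> ?J" unfolding j_def j0_def using Min_in[OF Jfin Jne]
    by (simp add: i_def v_def)
  then show "j < l" "v \<in> set (P j)" by auto
  show "\<forall>k<j. k \<noteq> i \<longrightarrow> v \<notin> set (P k)"
  proof (intro allI impI notI)
    fix k assume "k < j" "k \<noteq> i" "v \<in> set (P k)"
    then have "k \<in> ?J" using jin by auto
    then have "j \<le> k" unfolding j_def j0_def using Jfin by (simp add: i_def v_def)
    then show False using \<open>k < j\<close> by simp
  qed
  have "j \<noteq> i" using jin by auto
  moreover have "\<not> j < i"
  proof
    assume "j < i"
    then have "set (P j) \<inter> set (P i) = {}" using ismall il \<open>j \<noteq> i\<close> by auto
    then show False using vi jin by auto
  qed
  ultimately show "i < j" by simp
qed


lemma NI_isect: "P \<in> NI \<sigma> \<Longrightarrow> isect P = {}"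
  unfolding NI_def isect_def by auto

lemma splice_path:
  assumes "xs1 @ v # ys1 \<in> paths E a b" "xs2 @ v # ys2 \<in> paths E c d"
  shows "xs1 @ v # ys2 \<in> paths E a d"
proof -
  have "hd (xs1 @ v # ys2) = hd (xs1 @ v # ys1)" by (cases xs1) auto
  moreover have "last (xs1 @ v # ys2) = last (xs2 @ v # ys2)" by simp
  moreover have "successively E (xs1 @ v # ys2)"
    using assms unfolding paths_def
    by (auto simp: successively_append_iff successively_Cons)
  ultimately show ?thesis using assms unfolding paths_def by auto
qed

lemma sw_props:
  assumes P: "P \<in> Fam \<sigma>" and ne: "isect P \<noteq> {}"
  shows "i0 (sw P) = i0 P" "v0 (sw P) = v0 P" "j0 (sw P) = j0 P" "sw (sw P) = P"
    "sw P \<in> Fam (\<sigma> \<circ> Transposition.transpose (i0 P) (j0 P))" "isect (sw P) \<noteq> {}"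
proof -
  define i where "i = i0 P"
  define j where "j = j0 P"
  define v where "v = v0 P"
  note b = basic[OF P ne, folded i_def j_def v_def]
  obtain pre post where sp: "P i = pre @ v # post" "\<forall>x\<in>set pre. x \<notin> oth P i"
    using b(7) by blast
  obtain pj qj where spj: "P j = pj @ v # qj" "v \<notin> set pj"
    using split_list_first[OF b(5)] by blast
  have vpre: "v \<notin> set pre" using sp(2) b(9) by blast
  have Pi: "P i \<in> paths E (A i) (B (\<sigma> i))" and Pj: "P j \<in> paths E (A j) (B (\<sigma> j))"
    using P b(1,2) unfolding Fam_def by auto
  have dist: "distinct (P i)" using Pi path_distinct unfolding paths_def by auto
  then have dpp: "set pre \<inter> set post = {}" "v \<notin> set post" using sp(1) by auto
  have tw: "takeWhile (\<lambda>x. x \<noteq> v) (P i) = pre" "dropWhile (\<lambda>x. x \<noteq> v) (P i) = v # post"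
    "takeWhile (\<lambda>x. x \<noteq> v) (P j) = pj" "dropWhile (\<lambda>x. x \<noteq> v) (P j) = v # qj"
    using sp(1) vpre spj by (auto simp: tw_split dw_split)
  have ij: "i \<noteq> j" using b(3) by simp
  have swP: "sw P = P(i := pre @ v # qj, j := pj @ v # post)"
    unfolding sw_def Let_def using tw by (simp add: i_def j_def v_def)
  have swi: "sw P i = pre @ v # qj" and swj: "sw P j = pj @ v # post"
    and swk: "\<And>k. k \<noteq> i \<Longrightarrow> k \<noteq> j \<Longrightarrow> sw P k = P k"
    using swP ij by auto
  have setsw: "\<And>k. set (sw P k) \<subseteq> set (P i) \<union> set (P j) \<union> set (P k)"
    using swP sp(1) spj(1) by auto
  have iin: "i \<in> isect (sw P)"
    unfolding isect_def using b(1,2) ij swi swj by auto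
  then show "isect (sw P) \<noteq> {}" by auto
  have ieq: "i0 (sw P) = i"
    unfolding i0_def
  proof (rule Min_eqI)
    show "finite (isect (sw P))" unfolding isect_def by auto
    show "i \<in> isect (sw P)" by fact
    fix y assume y: "y \<in> isect (sw P)"
    show "i \<le> y"
    proof (rule ccontr)
      assume "\<not> i \<le> y"
      then have yi: "y < i" by simp
      then have yj: "y < j" using b(3) by simp
      from y obtain k where k: "k < l" "k \<noteq> y" "set (sw P y) \<inter> set (sw P k) \<noteq> {}"
        unfolding isect_def by auto
      have "sw P y = P y" using yi yj swk by simp
      moreover have "set (P y) \<inter> set (P k) = {}" using b(6) yi k(1,2) by blast
      moreover have "set (P y) \<inter> set (P i) = {}" using b(6) yi b(1) by blast
      moreover have "set (P y) \<inter> set (P j) = {}" using b(6) yi b(2) yj by blast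
      moreover obtain x where "x \<in> set (sw P y)" "x \<in> set (sw P k)" using k(3) by blast
      ultimately show False using setsw[of k] by auto
    qed
  qed
  then show "i0 (sw P) = i0 P" by (simp add: i_def)
  have othsw: "oth (sw P) i = (\<Union>k\<in>{k. k < l \<and> k \<noteq> i}. set (sw P k))" unfolding oth_def ..
  have pre_not: "\<forall>x\<in>set pre. x \<notin> oth (sw P) i"
  proof
    fix x assume x: "x \<in> set pre"
    show "x \<notin> oth (sw P) i"
    proof
      assume "x \<in> oth (sw P) i"
      then obtain k where k: "k < l" "k \<noteq> i" "x \<in> set (sw P k)" unfolding oth_def by auto
      show False
      proof (cases "k = j")
        case True
        then have "x \<in> set pj \<or> x = v \<or> x \<in> set post" using k(3) swj by auto
        moreover have "x \<notin> set pj"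
        proof
          assume "x \<in> set pj"
          then have "x \<in> set (P j)" using spj(1) by simp
          then have "x \<in> oth P i" using b(2) ij unfolding oth_def by auto
          then show False using sp(2) x by blast
        qed
        ultimately show False using vpre x dpp by auto
      next
        case False
        then have "x \<in> set (P k)" using k swk by auto
        then show False using sp(2) x k unfolding oth_def by auto
      qed
    qed
  qed
  have v_oth: "v \<in> oth (sw P) i" unfolding oth_def using swj b(2) ij by auto
  have veq: "v0 (sw P) = v"
    unfolding v0_def ieq swi using pre_not v_oth by simp
  then show "v0 (sw P) = v0 P" by (simp add: v_def)
  have jeq: "j0 (sw P) = j"
    unfolding j0_def ieq veq
  proof (rule Min_eqI)
    show "finite {ja. ja < l \<and> ja \<noteq> i \<and> v \<in> set (sw P ja)}" by auto
    show "j \<in> {ja. ja < l \<and> ja \<noteq> i \<and> v \<in> set (sw P ja)}" using b(2) ij swj by auto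
    fix y assume y: "y \<in> {ja. ja < l \<and> ja \<noteq> i \<and> v \<in> set (sw P ja)}"
    show "j \<le> y"
    proof (rule ccontr)
      assume "\<not> j \<le> y"
      then have "y < j" by simp
      then have "sw P y = P y" using y swk by auto
      then show False using b(8) y \<open>y < j\<close> by auto
    qed
  qed
  then show "j0 (sw P) = j0 P" by (simp add: j_def)
  have tw2: "takeWhile (\<lambda>x. x \<noteq> v) (sw P i) = pre" "dropWhile (\<lambda>x. x \<noteq> v) (sw P i) = v # qj"
    "takeWhile (\<lambda>x. x \<noteq> v) (sw P j) = pj" "dropWhile (\<lambda>x. x \<noteq> v) (sw P j) = v # post"
    using swi swj vpre spj by (auto simp: tw_split dw_split)
  have e: "sw (sw P) = (sw P)(i := takeWhile (\<lambda>x. x \<noteq> v) (sw P i) @ dropWhile (\<lambda>x. x \<noteq> v) (sw P j),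
       j := takeWhile (\<lambda>x. x \<noteq> v) (sw P j) @ dropWhile (\<lambda>x. x \<noteq> v) (sw P i))"
    using sw_def[of "sw P"] ieq jeq veq by (simp add: Let_def)
  show "sw (sw P) = P"
    unfolding e tw2
    using swP sp(1) spj(1) by (auto simp: fun_eq_iff)
  show "sw P \<in> Fam (\<sigma> \<circ> Transposition.transpose (i0 P) (j0 P))"
    unfolding Fam_def
  proof (rule PiE_I)
    fix k assume k: "k \<in> {..<l}"
    show "sw P k \<in> paths E (A k) (B ((\<sigma> \<circ> Transposition.transpose (i0 P) (j0 P)) k))"
    proof (cases "k = i \<or> k = j")
      case True
      then show ?thesis
      proof
        assume "k = i"
        then show ?thesis using splice_path[of pre v post "A i" "B (\<sigma> i)" pj qj "A j" "B (\<sigma> j)"]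
          Pi Pj sp(1) spj(1) swi by (simp add: i_def[symmetric] j_def[symmetric])
      next
        assume "k = j"
        then show ?thesis using splice_path[of pj v qj "A j" "B (\<sigma> j)" pre post "A i" "B (\<sigma> i)"]
          Pi Pj sp(1) spj(1) swj ij by (simp add: i_def[symmetric] j_def[symmetric])
      qed
    next
      case False
      then show ?thesis using swk[of k] P k unfolding Fam_def
        by (auto simp: i_def[symmetric] j_def[symmetric])
    qed
  next
    fix k assume "k \<notin> {..<l}"
    then show "sw P k = undefined" using swk[of k] b(1,2) P unfolding Fam_def by (auto simp: PiE_def extensional_def)
  qed
qed


lemma Fam_finite: "finite (Fam \<sigma>)"
  unfolding Fam_def by (rule finite_PiE) (auto intro: fin)

lemma NI_sub: "NI \<sigma> \<subseteq> Fam \<sigma>" unfolding NI_def by auto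

lemma intersecting_sum_zero:
  "(\<Sum>x\<in>(SIGMA \<sigma>:{\<sigma>. \<sigma> permutes {..<l}}. Fam \<sigma> - NI \<sigma>). sign (fst x)) = 0"
proof (rule sum_involution_zero[where g = iota])
  let ?X = "SIGMA \<sigma>:{\<sigma>. \<sigma> permutes {..<l}}. Fam \<sigma> - NI \<sigma>"
  show "finite ?X"
    by (rule finite_SigmaI) (auto intro: finite_permutations Fam_finite)
  fix x assume x: "x \<in> ?X"
  obtain \<sigma> P where xe: "x = (\<sigma>, P)" by (cases x)
  have s: "\<sigma> permutes {..<l}" and P: "P \<in> Fam \<sigma>" "P \<notin> NI \<sigma>" using x xe by auto
  have ne: "isect P \<noteq> {}" using isect_not_NI[OF P] .
  note b = basic[OF P(1) ne]
  note swp = sw_props[OF P(1) ne]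
  let ?t = "Transposition.transpose (i0 P) (j0 P)"
  have tp: "?t permutes {..<l}" using b(1,2) by (intro permutes_swap_id) auto
  have sp: "\<sigma> \<circ> ?t permutes {..<l}" using permutes_compose[OF tp s] .
  have io: "iota x = (\<sigma> \<circ> ?t, sw P)" unfolding iota_def xe by simp
  show "iota x \<in> ?X"
    unfolding io using sp swp(5) swp(6) NI_isect by blast
  show "iota (iota x) = x"
    unfolding io iota_def xe using swp(1,3,4) by (simp add: fun_eq_iff)
  have "sign (\<sigma> \<circ> ?t) = sign \<sigma> * sign ?t"
    by (rule sign_compose) (use s tp permutation_permutes in auto)
  also have "sign ?t = -1" using b(3) by (simp add: sign_swap_id)
  finally have e: "sign (\<sigma> \<circ> ?t) = sign \<sigma> * -1" .
  show "sign (fst (iota x)) = - sign (fst x)" using io e xe by (metis fst_conv mult_minus1_right)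
qed

theorem lgv_det:
  "det (mat l l (\<lambda>(i,j). int (card (paths E (A j) (B i))))) =
     (\<Sum>\<sigma> | \<sigma> permutes {..<l}. sign \<sigma> * int (card (NI \<sigma>)))"
proof -
  let ?M = "mat l l (\<lambda>(i,j). int (card (paths E (A j) (B i))))"
  let ?S = "{\<sigma>. \<sigma> permutes {..<l}}"
  have "det ?M = (\<Sum>p | p permutes {0..<l}. signof p * (\<Prod>j<l. ?M $$ (p j, j)))"
    by (rule det_col) auto
  also have "\<dots> = (\<Sum>p\<in>?S. sign p * int (card (Fam p)))"
  proof (rule sum.cong)
    show "{p. p permutes {0..<l}} = ?S" by (simp add: atLeast0LessThan)
    fix p assume "p \<in> ?S"
    then have pj: "\<And>j. j < l \<Longrightarrow> p j < l" using permutes_in_image by fastforce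
    have "(\<Prod>j<l. ?M $$ (p j, j)) = (\<Prod>j<l. int (card (paths E (A j) (B (p j)))))"
      by (rule prod.cong) (auto simp: pj)
    also have "\<dots> = int (card (Fam p))"
      unfolding Fam_def by (simp add: card_PiE)
    finally show "signof p * (\<Prod>j<l. ?M $$ (p j, j)) = sign p * int (card (Fam p))"
      by simp
  qed
  also have "\<dots> = (\<Sum>p\<in>?S. sign p * int (card (NI p)) + sign p * int (card (Fam p - NI p)))"
  proof (rule sum.cong[OF refl])
    fix p
    have "card (Fam p) = card (NI p) + card (Fam p - NI p)"
      using card_Diff_subset[OF finite_subset[OF NI_sub Fam_finite] NI_sub, of p]
        card_mono[OF Fam_finite NI_sub, of p] by simp
    then show "sign p * int (card (Fam p)) = sign p * int (card (NI p)) + sign p * int (card (Fam p - NI p))"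
      by (simp add: algebra_simps)
  qed
  also have "\<dots> = (\<Sum>p\<in>?S. sign p * int (card (NI p))) + (\<Sum>p\<in>?S. sign p * int (card (Fam p - NI p)))"
    by (rule sum.distrib)
  also have "(\<Sum>p\<in>?S. sign p * int (card (Fam p - NI p))) = (\<Sum>p\<in>?S. (\<Sum>P\<in>Fam p - NI p. sign p))"
    by (simp add: mult.commute)
  also have "\<dots> = (\<Sum>x\<in>(SIGMA \<sigma>:?S. Fam \<sigma> - NI \<sigma>). sign (fst x))"
    by (subst sum.Sigma) (auto intro: finite_permutations Fam_finite simp: case_prod_beta)
  also have "\<dots> = 0" by (rule intersecting_sum_zero)
  finally show ?thesis by simp
qed

theorem lgv_det_id:
  assumes "\<And>\<sigma>. \<sigma> permutes {..<l} \<Longrightarrow> \<sigma> \<noteq> id \<Longrightarrow> NI \<sigma> = {}"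
  shows "det (mat l l (\<lambda>(i,j). int (card (paths E (A j) (B i))))) = int (card (NI id))"
proof -
  have "(\<Sum>\<sigma> | \<sigma> permutes {..<l}. sign \<sigma> * int (card (NI \<sigma>))) = (\<Sum>\<sigma>\<in>{id}. sign \<sigma> * int (card (NI \<sigma>)))"
    by (rule sum.mono_neutral_right) (auto simp: assms finite_permutations permutes_id)
  then show ?thesis using lgv_det by (simp add: sign_id)
qed

end


definition gstep :: "nat \<times> nat \<Rightarrow> nat \<times> nat \<Rightarrow> bool" where
  "gstep u v \<longleftrightarrow> (fst v = Suc (fst u) \<and> snd v = snd u) \<or> (fst v = fst u \<and> Suc (snd v) = snd u)"

definition grk :: "nat \<times> nat \<Rightarrow> int" where
  "grk u = int (fst u) - int (snd u)"

lemma gstep_rk: "gstep u v \<Longrightarrow> grk u < grk v"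
  unfolding gstep_def grk_def by auto

lemma paths_Cons_iff:
  "u # P \<in> paths E a b \<longleftrightarrow> u = a \<and> (P = [] \<and> u = b \<or> P \<noteq> [] \<and> E u (hd P) \<and> P \<in> paths E (hd P) b)"
  unfolding paths_def by (cases P) auto

lemma gpath_mono:
  assumes "P \<in> paths gstep a b" "v \<in> set P"
  shows "fst a \<le> fst v \<and> fst v \<le> fst b \<and> snd b \<le> snd v \<and> snd v \<le> snd a"
  using assms
proof (induction P arbitrary: a v)
  case Nil then show ?case by (simp add: paths_def)
next
  case (Cons u P)
  from Cons.prems(1) have ua: "u = a" and cases: "P = [] \<and> u = b \<or> P \<noteq> [] \<and> gstep u (hd P) \<and> P \<in> paths gstep (hd P) b"
    by (auto simp: paths_Cons_iff)
  show ?case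
  proof (cases "P = []")
    case True then show ?thesis using Cons.prems cases ua by auto
  next
    case False
    then have st: "gstep a (hd P)" and Pp: "P \<in> paths gstep (hd P) b" using cases ua by auto
    have hdP: "hd P \<in> set P" using False by simp
    have IHh: "fst (hd P) \<le> fst b \<and> snd b \<le> snd (hd P)" using Cons.IH[OF Pp hdP] by auto
    show ?thesis
    proof (cases "v = u")
      case True then show ?thesis using st IHh ua unfolding gstep_def by auto
    next
      case False
      then have "v \<in> set P" using Cons.prems(2) by simp
      from Cons.IH[OF Pp this] st show ?thesis unfolding gstep_def by auto
    qed
  qed
qed

lemma gpaths_empty:
  assumes "\<not> (fst a \<le> fst b \<and> snd b \<le> snd a)"
  shows "paths gstep a b = {}"
proof -
  { fix P assume P: "P \<in> paths gstep a b"
    then have "hd P \<in> set P" "hd P = a" unfolding paths_def by auto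
    with gpath_mono[OF P] assms have False by auto }
  then show ?thesis by auto
qed

lemma gpaths_same: "paths gstep a a = {[a]}"
proof -
  { fix P assume P: "P \<in> paths gstep a a"
    have "P = [a]"
    proof (cases P)
      case Nil then show ?thesis using P by (simp add: paths_def)
    next
      case (Cons u Q)
      show ?thesis
      proof (cases "Q = []")
        case True then show ?thesis using P Cons by (simp add: paths_def)
      next
        case False
        then have st: "gstep a (hd Q)" and Qp: "Q \<in> paths gstep (hd Q) a" using P Cons by (auto simp: paths_Cons_iff)
        have "fst (hd Q) \<le> fst a \<and> snd a \<le> snd (hd Q)" using gpath_mono[OF Qp, of "hd Q"] False by auto
        then have False using st by (cases "hd Q") (simp add: gstep_def)
        then show ?thesis ..
      qed
    qed }
  moreover have "[a] \<in> paths gstep a a" unfolding paths_def by simp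
  ultimately show ?thesis by blast
qed

lemma gpaths_step:
  assumes "a \<noteq> b"
  shows "paths gstep a b = Cons a ` (paths gstep (Suc (fst a), snd a) b \<union>
            (if snd a = 0 then {} else paths gstep (fst a, snd a - 1) b))"
proof (intro equalityI subsetI)
  fix P assume P: "P \<in> paths gstep a b"
  then obtain Q where PQ: "P = a # Q" unfolding paths_def by (cases P) auto
  with P assms have Q: "Q \<noteq> []" "gstep a (hd Q)" "Q \<in> paths gstep (hd Q) b"
    by (auto simp: paths_Cons_iff)
  from Q(2) have "hd Q = (Suc (fst a), snd a) \<or> (snd a \<noteq> 0 \<and> hd Q = (fst a, snd a - 1))"
    unfolding gstep_def by (cases "hd Q") auto
  then show "P \<in> Cons a ` (paths gstep (Suc (fst a), snd a) b \<union>
            (if snd a = 0 then {} else paths gstep (fst a, snd a - 1) b))"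
    using Q(3) PQ by auto
next
  fix P assume "P \<in> Cons a ` (paths gstep (Suc (fst a), snd a) b \<union>
            (if snd a = 0 then {} else paths gstep (fst a, snd a - 1) b))"
  then obtain Q where PQ: "P = a # Q" and Q: "Q \<in> paths gstep (Suc (fst a), snd a) b \<or>
     (snd a \<noteq> 0 \<and> Q \<in> paths gstep (fst a, snd a - 1) b)" by (auto split: if_splits)
  then have "Q \<noteq> []" "gstep a (hd Q)" "Q \<in> paths gstep (hd Q) b"
    unfolding paths_def gstep_def by auto
  then show "P \<in> paths gstep a b" unfolding PQ paths_Cons_iff by auto
qed

lemma gpaths_card_aux:
  "\<forall>a. fst b - fst a + (snd a - snd b) = n \<longrightarrow>
     finite (paths gstep a b) \<and>
     card (paths gstep a b) = (if fst a \<le> fst b \<and> snd b \<le> snd a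
        then (fst b - fst a + (snd a - snd b)) choose (fst b - fst a) else 0)"
proof (induction n)
  case 0
  show ?case
  proof (intro allI impI)
    fix a :: "nat \<times> nat" assume "fst b - fst a + (snd a - snd b) = 0"
    show "finite (paths gstep a b) \<and> card (paths gstep a b) = (if fst a \<le> fst b \<and> snd b \<le> snd a
        then (fst b - fst a + (snd a - snd b)) choose (fst b - fst a) else 0)"
    proof (cases "fst a \<le> fst b \<and> snd b \<le> snd a")
      case True
      with \<open>fst b - fst a + (snd a - snd b) = 0\<close> have "a = b" by (cases a, cases b) auto
      then show ?thesis by (simp add: gpaths_same)
    next
      case False then show ?thesis unfolding if_not_P[OF False] by (simp add: gpaths_empty[OF False])
    qed
  qed
next
  case (Suc n)
  show ?case
  proof (intro allI impI)
    fix a :: "nat \<times> nat" assume an: "fst b - fst a + (snd a - snd b) = Suc n"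
    show "finite (paths gstep a b) \<and> card (paths gstep a b) = (if fst a \<le> fst b \<and> snd b \<le> snd a
        then (fst b - fst a + (snd a - snd b)) choose (fst b - fst a) else 0)"
    proof (cases "fst a \<le> fst b \<and> snd b \<le> snd a")
      case False then show ?thesis unfolding if_not_P[OF False] by (simp add: gpaths_empty[OF False])
    next
      case True
      have ab: "a \<noteq> b" using an by auto
      obtain x y where a: "a = (x, y)" by (cases a)
      obtain x' y' where b: "b = (x', y')" by (cases b)
      have xx0: "x \<le> x'" "y' \<le> y" using True a b by auto
      let ?R = "paths gstep (Suc x, y) b"
      let ?D = "if y = 0 then {} else paths gstep (x, y - 1) b"
      have R: "finite ?R \<and> card ?R = (if Suc x \<le> x' \<and> y' \<le> y then (x' - Suc x + (y - y')) choose (x' - Suc x) else 0)"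
      proof (cases "Suc x \<le> x'")
        case True then show ?thesis using Suc.IH[rule_format, of "(Suc x, y)"] an a b by auto
      next
        case False then show ?thesis using gpaths_empty[of "(Suc x, y)" b] b by auto
      qed
      have D: "finite ?D \<and> card ?D = (if y' < y then (x' - x + (y - 1 - y')) choose (x' - x) else 0)"
      proof (cases "y' < y")
        case True then show ?thesis using Suc.IH[rule_format, of "(x, y - 1)"] an a b True xx0 by auto
      next
        case False
        then have "y = 0 \<or> paths gstep (x, y - 1) b = {}" using gpaths_empty[of "(x, y - 1)" b] b by force
        then show ?thesis using False by auto
      qed
      have disj: "?R \<inter> ?D = {}"
      proof -
        { fix P assume "P \<in> ?R" "P \<in> ?D"
          then have "hd P = (Suc x, y)" "hd P = (x, y - 1)" unfolding paths_def by (auto split: if_splits)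
          then have False by simp }
        then show ?thesis by auto
      qed
      have eq: "paths gstep a b = Cons a ` (?R \<union> ?D)" using gpaths_step[OF ab] a by simp
      have fin: "finite (paths gstep a b)" using eq R D by simp
      have "card (paths gstep a b) = card (?R \<union> ?D)"
        unfolding eq by (rule card_image) (simp add: inj_on_def)
      also have "\<dots> = card ?R + card ?D" using R D disj by (simp add: card_Un_disjoint)
      also have "\<dots> = (x' - x + (y - y')) choose (x' - x)"
      proof -
        have xx: "x \<le> x'" "y' \<le> y" using True a b by auto
        consider "x = x'" | "y = y'" | "x < x' \<and> y' < y" using xx by linarith
        then show ?thesis
        proof cases
          case 1
          then have "y' < y" using ab a b xx by auto
          then show ?thesis using R D 1 by simp
        next
          case 2
          then have "x < x'" using ab a b xx by auto
          then show ?thesis using R D 2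
            by simp
        next
          case 3
          then obtain p q where pq: "x' - x = Suc p" "y - y' = Suc q" by (metis Suc_diff_Suc zero_less_diff)
          have "x' - Suc x = p" "y - 1 - y' = q" using pq by auto
          then have "card ?R + card ?D = ((p + Suc q) choose p) + ((Suc p + q) choose (Suc p))"
            using R D 3 pq by simp
          also have "\<dots> = (Suc p + Suc q) choose (Suc p)"
          proof -
            have "(Suc p + Suc q) choose (Suc p) = Suc (p + Suc q) choose (Suc p)" by simp
            also have "\<dots> = ((p + Suc q) choose p) + ((p + Suc q) choose (Suc p))"
              by (rule binomial_Suc_Suc)
            finally show ?thesis by simp
          qed
          finally show ?thesis using pq by simp
        qed
      qed
      finally show ?thesis using fin True by (simp add: a b)
    qed
  qed
qed

lemma gpaths_finite: "finite (paths gstep a b)"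
  using gpaths_card_aux by blast

lemma gpaths_card:
  "card (paths gstep a b) = (if fst a \<le> fst b \<and> snd b \<le> snd a
        then (fst b - fst a + (snd a - snd b)) choose (fst b - fst a) else 0)"
  using gpaths_card_aux by blast


lemma lgv_grid: "lgv gstep grk"
  by unfold_locales (auto intro: gstep_rk gpaths_finite)

lemma col_right:
  assumes "Q \<in> paths gstep c d" "(x, y') \<in> set Q" "x < fst d"
  shows "\<exists>y''\<le>y'. (Suc x, y'') \<in> set Q"
  using assms
proof (induction Q arbitrary: c y')
  case Nil then show ?case by (simp add: paths_def)
next
  case (Cons u Q)
  from Cons.prems(1) have uc: "u = c" and cs: "Q = [] \<and> u = d \<or> Q \<noteq> [] \<and> gstep u (hd Q) \<and> Q \<in> paths gstep (hd Q) d"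
    by (auto simp: paths_Cons_iff)
  show ?case
  proof (cases "u = (x, y')")
    case True
    then have "u \<noteq> d" using Cons.prems(3) by auto
    then have Q: "Q \<noteq> []" "gstep u (hd Q)" "Q \<in> paths gstep (hd Q) d" using cs by auto
    have hq: "hd Q \<in> set Q" using Q(1) by simp
    from Q(2) True have "hd Q = (Suc x, y') \<or> (y' > 0 \<and> hd Q = (x, y' - 1))"
      unfolding gstep_def by (cases "hd Q") auto
    then show ?thesis
    proof
      assume "hd Q = (Suc x, y')" then show ?thesis using hq by force
    next
      assume h: "y' > 0 \<and> hd Q = (x, y' - 1)"
      from Cons.IH[OF Q(3), of "y' - 1"] h hq Cons.prems(3) obtain y'' where "y'' \<le> y' - 1" "(Suc x, y'') \<in> set Q"
        by auto
      then show ?thesis by (intro exI[of _ y'']) auto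
    qed
  next
    case False
    then have xin: "(x, y') \<in> set Q" using Cons.prems(2) by simp
    then have Q: "Q \<noteq> []" "Q \<in> paths gstep (hd Q) d" using cs by auto
    from Cons.IH[OF Q(2) xin Cons.prems(3)] show ?thesis by auto
  qed
qed

lemma cross_aux:
  assumes "P \<in> paths gstep a b" "Q \<in> paths gstep c d"
    "\<exists>y'<snd a. (fst a, y') \<in> set Q"
    "\<forall>v\<in>set P. fst v < fst d"
    "\<forall>y'. (fst b, y') \<in> set Q \<longrightarrow> snd b \<le> y'"
  shows "set P \<inter> set Q \<noteq> {}"
  using assms
proof (induction P arbitrary: a)
  case Nil then show ?case by (simp add: paths_def)
next
  case (Cons u P)
  from Cons.prems(1) have ua: "u = a" and cs: "P = [] \<and> u = b \<or> P \<noteq> [] \<and> gstep u (hd P) \<and> P \<in> paths gstep (hd P) b"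
    by (auto simp: paths_Cons_iff)
  show ?case
  proof (cases "P = []")
    case True
    then have "a = b" using cs ua by auto
    then show ?thesis using Cons.prems(3,5) by force
  next
    case False
    then have st: "gstep a (hd P)" and Pp: "P \<in> paths gstep (hd P) b" using cs ua by auto
    show ?thesis
    proof (rule ccontr)
      assume dis: "\<not> set (u # P) \<inter> set Q \<noteq> {}"
      obtain y' where y': "y' < snd a" "(fst a, y') \<in> set Q" using Cons.prems(3) by blast
      have inv: "\<exists>y'<snd (hd P). (fst (hd P), y') \<in> set Q"
      proof -
        from st have "hd P = (Suc (fst a), snd a) \<or> (snd a > 0 \<and> hd P = (fst a, snd a - 1))"
          unfolding gstep_def by (cases "hd P") auto
        then show ?thesis
        proof
          assume h: "hd P = (Suc (fst a), snd a)"
          have "fst a < fst d" using Cons.prems(4) ua by simp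
          from col_right[OF Cons.prems(2) y'(2) this] obtain y'' where "y'' \<le> y'" "(Suc (fst a), y'') \<in> set Q"
            by blast
          then show ?thesis using h y'(1) by (intro exI[of _ y'']) auto
        next
          assume h: "snd a > 0 \<and> hd P = (fst a, snd a - 1)"
          have "hd P \<in> set (u # P)" using False by simp
          then have "hd P \<notin> set Q" using dis by blast
          then have "y' \<noteq> snd a - 1" using h y'(2) by auto
          then show ?thesis using h y' by (intro exI[of _ y']) auto
        qed
      qed
      have "set P \<inter> set Q \<noteq> {}"
        by (rule Cons.IH[OF Pp Cons.prems(2) inv]) (use Cons.prems(4,5) in auto)
      then show False using dis by auto
    qed
  qed
qed

lemma no_cross:
  assumes P: "P \<in> paths gstep (1, h1) (Suc e1, Suc e1)" and Q: "Q \<in> paths gstep (1, h2) (Suc e2, Suc e2)"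
    and "h2 < h1" "e1 < e2"
  shows "set P \<inter> set Q \<noteq> {}"
proof (rule cross_aux[OF P Q])
  have "(1, h2) \<in> set Q" using Q unfolding paths_def by (cases Q) auto
  then show "\<exists>y'<snd (1, h1). (fst (1::nat, h1), y') \<in> set Q" using assms(3) by auto
  show "\<forall>v\<in>set P. fst v < fst (Suc e2, Suc e2)"
    using gpath_mono[OF P] assms(4) by fastforce
  show "\<forall>y'. (fst (Suc e1, Suc e1), y') \<in> set Q \<longrightarrow> snd (Suc e1, Suc e1) \<le> y'"
    using gpath_mono[OF Q] assms(4) by fastforce
qed

lemma perm_inversion:
  fixes \<sigma> :: "nat \<Rightarrow> nat" and l :: nat
  assumes "\<sigma> permutes {..<l}" "\<sigma> \<noteq> id"
  shows "\<exists>i k. i < k \<and> k < l \<and> \<sigma> k < \<sigma> i"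
proof (rule ccontr)
  assume nex: "\<not> ?thesis"
  have mono: "\<sigma> i \<le> \<sigma> k" if "i < k" "k < l" for i k
  proof (rule ccontr)
    assume "\<not> \<sigma> i \<le> \<sigma> k"
    then have "\<sigma> k < \<sigma> i" by simp
    then have "\<exists>i k. i < k \<and> k < l \<and> \<sigma> k < \<sigma> i" using that by blast
    then show False using nex by blast
  qed
  have inj: "inj \<sigma>" using assms(1) permutes_inj by blast
  have mono': "\<And>i k. i < k \<Longrightarrow> k < l \<Longrightarrow> \<sigma> i < \<sigma> k"
  proof -
    fix i k assume "i < k" "k < l"
    then have "\<sigma> i \<le> \<sigma> k" "\<sigma> i \<noteq> \<sigma> k" using mono inj inj_eq[OF inj, of i k] by auto
    then show "\<sigma> i < \<sigma> k" by simp
  qed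
  have fx: "\<forall>i<l. \<sigma> i = i"
  proof (intro allI impI)
    fix i assume "i < l"
    then show "\<sigma> i = i"
    proof (induction i rule: less_induct)
      case (less i)
      have ge: "i \<le> \<sigma> i"
      proof (rule ccontr)
        assume "\<not> i \<le> \<sigma> i"
        then have "\<sigma> i < i" by simp
        then have "\<sigma> (\<sigma> i) = \<sigma> i" using less by auto
        then have "\<sigma> i = i" using inj by (simp add: inj_eq)
        then show False using \<open>\<sigma> i < i\<close> by simp
      qed
      show ?case
      proof (rule ccontr)
        assume ne: "\<sigma> i \<noteq> i"
        have "i \<in> {..<l}" using less by simp
        then have "i \<in> \<sigma> ` {..<l}" using permutes_image[OF assms(1)] by simp
        then obtain k where k: "k \<in> {..<l}" "\<sigma> k = i" by blast
        have "k \<noteq> i" using k ne by auto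
        moreover have "\<not> k < i"
        proof
          assume "k < i"
          then have "\<sigma> k = k" using less.IH less.prems by simp
          then show False using k(2) \<open>k < i\<close> by simp
        qed
        ultimately have "i < k" by simp
        then have "\<sigma> i < \<sigma> k" using mono' k by auto
        then show False using k ge by simp
      qed
    qed
  qed
  have "\<sigma> = id"
  proof
    fix i show "\<sigma> i = id i"
    proof (cases "i < l")
      case True then show ?thesis using fx by simp
    next
      case False then show ?thesis using assms(1) unfolding permutes_def by simp
    qed
  qed
  then show False using assms(2) by simp
qed

lemma grid_NI_empty:
  assumes h: "\<And>i k. i < k \<Longrightarrow> k < l \<Longrightarrow> h k < h i"
    and e: "\<And>i k. i < k \<Longrightarrow> k < l \<Longrightarrow> e k < e i"
    and s: "\<sigma> permutes {..<l}" "\<sigma> \<noteq> id"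
  shows "lgv.NI gstep l (\<lambda>i. (1, h i)) (\<lambda>j. (Suc (e j), Suc (e j))) \<sigma> = {}"
proof (rule ccontr)
  assume "lgv.NI gstep l (\<lambda>i. (1, h i)) (\<lambda>j. (Suc (e j), Suc (e j))) \<sigma> \<noteq> {}"
  then obtain P where P: "P \<in> lgv.NI gstep l (\<lambda>i. (1, h i)) (\<lambda>j. (Suc (e j), Suc (e j))) \<sigma>" by blast
  obtain i k where ik: "i < k" "k < l" "\<sigma> k < \<sigma> i" using perm_inversion[OF s] by blast
  have sl: "\<sigma> i < l" "\<sigma> k < l" using permutes_in_image[OF s(1)] ik by auto
  have Pi: "P i \<in> paths gstep (1, h i) (Suc (e (\<sigma> i)), Suc (e (\<sigma> i)))"
    and Pk: "P k \<in> paths gstep (1, h k) (Suc (e (\<sigma> k)), Suc (e (\<sigma> k)))"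
    and dis: "set (P i) \<inter> set (P k) = {}"
    using P ik unfolding lgv.NI_def[OF lgv_grid] lgv.Fam_def[OF lgv_grid] by auto
  have "set (P i) \<inter> set (P k) \<noteq> {}"
    by (rule no_cross[OF Pi Pk]) (use h e ik sl in auto)
  then show False using dis by simp
qed


definition col :: "nat \<Rightarrow> nat \<Rightarrow> nat \<Rightarrow> (nat \<times> nat) list" where
  "col x t e = map (\<lambda>y. (x, y)) (rev [e..<Suc t])"

fun mkp :: "nat \<Rightarrow> nat \<Rightarrow> nat \<Rightarrow> nat \<Rightarrow> (nat \<Rightarrow> nat) \<Rightarrow> (nat \<times> nat) list" where
  "mkp x 0 t e g = col x t e"
| "mkp x (Suc r) t e g = col x t (g x) @ mkp (Suc x) r (g x) e g"

definition gvalid :: "nat \<Rightarrow> nat \<Rightarrow> nat \<Rightarrow> nat \<Rightarrow> (nat \<Rightarrow> nat) \<Rightarrow> bool" where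
  "gvalid x r t e g \<longleftrightarrow> e \<le> t \<and> (\<forall>y. x \<le> y \<and> y < x + r \<longrightarrow> e \<le> g y \<and> g y \<le> t) \<and>
     (\<forall>y y'. x \<le> y \<and> y \<le> y' \<and> y' < x + r \<longrightarrow> g y' \<le> g y)"

lemma col_Suc: "e \<le> t \<Longrightarrow> col x (Suc t) e = (x, Suc t) # col x t e"
  unfolding col_def by (simp add: upt_Suc_append)

lemma col_same: "col x t t = [(x, t)]"
  unfolding col_def by simp

lemma col_set: "set (col x t e) = {(p, q). p = x \<and> e \<le> q \<and> q \<le> t}"
  unfolding col_def by auto

lemma col_path: "e \<le> t \<Longrightarrow> col x t e \<in> paths gstep (x, t) (x, e)"
proof (induction t)
  case 0 then show ?case by (simp add: col_same paths_def)
next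
  case (Suc t)
  show ?case
  proof (cases "e = Suc t")
    case True then show ?thesis by (simp add: col_same paths_def)
  next
    case False
    then have et: "e \<le> t" using Suc.prems by simp
    have "col x t e \<in> paths gstep (x, t) (x, e)" by (rule Suc.IH[OF et])
    then show ?thesis unfolding col_Suc[OF et] paths_Cons_iff
      by (auto simp: paths_def gstep_def)
  qed
qed

lemma append_paths:
  assumes "xs \<in> paths E a b" "ys \<in> paths E c d" "E b c"
  shows "xs @ ys \<in> paths E a d"
  using assms unfolding paths_def by (auto simp: successively_append_iff)

lemma gvalid_Suc: "gvalid x (Suc r) t e g \<Longrightarrow> gvalid (Suc x) r (g x) e g"
  unfolding gvalid_def by auto

lemma mkp_path: "gvalid x r t e g \<Longrightarrow> mkp x r t e g \<in> paths gstep (x, t) (x + r, e)"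
proof (induction r arbitrary: x t)
  case 0 then show ?case by (simp add: col_path gvalid_def)
next
  case (Suc r)
  have c: "col x t (g x) \<in> paths gstep (x, t) (x, g x)"
    using Suc.prems by (intro col_path) (auto simp: gvalid_def)
  have m: "mkp (Suc x) r (g x) e g \<in> paths gstep (Suc x, g x) (Suc x + r, e)"
    by (rule Suc.IH[OF gvalid_Suc[OF Suc.prems]])
  have "gstep (x, g x) (Suc x, g x)" by (simp add: gstep_def)
  from append_paths[OF c m this] show ?case by simp
qed

lemma mkp_cong: "(\<And>y. x \<le> y \<Longrightarrow> y < x + r \<Longrightarrow> g y = g' y) \<Longrightarrow> mkp x r t e g = mkp x r t e g'"
proof (induction r arbitrary: x t)
  case 0 then show ?case by simp
next
  case (Suc r)
  have "g x = g' x" using Suc.prems by simp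
  moreover have "mkp (Suc x) r (g x) e g = mkp (Suc x) r (g x) e g'"
    by (rule Suc.IH) (use Suc.prems in auto)
  ultimately show ?case by simp
qed

lemma mkp_set:
  "gvalid x r t e g \<Longrightarrow> (p, q) \<in> set (mkp x r t e g) \<longleftrightarrow>
     x \<le> p \<and> p \<le> x + r \<and> (if p = x + r then e else g p) \<le> q \<and> q \<le> (if p = x then t else g (p - 1))"
proof (induction r arbitrary: x t)
  case 0 then show ?case by (auto simp: col_set)
next
  case (Suc r)
  have v: "gvalid (Suc x) r (g x) e g" by (rule gvalid_Suc[OF Suc.prems])
  have IH: "(p, q) \<in> set (mkp (Suc x) r (g x) e g) \<longleftrightarrow>
     Suc x \<le> p \<and> p \<le> Suc x + r \<and> (if p = Suc x + r then e else g p) \<le> q \<and> q \<le> (if p = Suc x then g x else g (p - 1))"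
    by (rule Suc.IH[OF v])
  show ?case unfolding mkp.simps set_append Un_iff IH col_set
    by (cases "p = x"; cases "p = Suc x") auto
qed

lemma gpath_mkp:
  assumes "P \<in> paths gstep (x, t) (x', e)"
  shows "x \<le> x' \<and> (\<exists>g. gvalid x (x' - x) t e g \<and> P = mkp x (x' - x) t e g)"
  using assms
proof (induction P arbitrary: x t)
  case Nil then show ?case by (simp add: paths_def)
next
  case (Cons u P)
  from Cons.prems have ua: "u = (x, t)" and cs: "P = [] \<and> u = (x', e) \<or> P \<noteq> [] \<and> gstep u (hd P) \<and> P \<in> paths gstep (hd P) (x', e)"
    by (auto simp: paths_Cons_iff)
  show ?case
  proof (cases "P = []")
    case True
    then have "x = x'" "t = e" using cs ua by auto
    then show ?thesis using True ua
      by (auto simp: gvalid_def col_same intro!: exI[of _ "\<lambda>_. e"])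
  next
    case False
    then have st: "gstep (x, t) (hd P)" and Pp: "P \<in> paths gstep (hd P) (x', e)" using cs ua by auto
    from st have "hd P = (Suc x, t) \<or> (t > 0 \<and> hd P = (x, t - 1))"
      unfolding gstep_def by (cases "hd P") auto
    then show ?thesis
    proof
      assume h: "hd P = (Suc x, t)"
      from Cons.IH[of "Suc x" t] Pp h obtain g where
        g: "Suc x \<le> x'" "gvalid (Suc x) (x' - Suc x) t e g" "P = mkp (Suc x) (x' - Suc x) t e g" by auto
      define g' where "g' = g(x := t)"
      obtain r where r: "x' - x = Suc r" "x' - Suc x = r" using g(1) by (metis Suc_diff_Suc Suc_le_eq)
      have "mkp (Suc x) r t e g' = mkp (Suc x) r t e g"
        by (rule mkp_cong) (simp add: g'_def)
      then have "u # P = mkp x (x' - x) t e g'"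
        using g(3) ua r by (simp add: g'_def col_same)
      moreover have "gvalid x (x' - x) t e g'"
        using g(2) r unfolding gvalid_def g'_def
        by (auto simp: le_Suc_eq)
      ultimately show ?thesis using g(1) by auto
    next
      assume h: "t > 0 \<and> hd P = (x, t - 1)"
      from Cons.IH[of x "t - 1"] Pp h obtain g where
        g: "x \<le> x'" "gvalid x (x' - x) (t - 1) e g" "P = mkp x (x' - x) (t - 1) e g" by auto
      have gv: "gvalid x (x' - x) t e g" using g(2) unfolding gvalid_def by auto
      have "u # P = mkp x (x' - x) t e g"
      proof (cases "x' - x")
        case 0
        then have "e \<le> t - 1" using g(2) by (simp add: gvalid_def)
        then show ?thesis using g(3) ua 0 h col_Suc[of e "t - 1" x] by simp
      next
        case (Suc r)
        then have "g x \<le> t - 1" using g(2) by (simp add: gvalid_def)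
        then show ?thesis using g(3) ua Suc h col_Suc[of "g x" "t - 1" x] by simp
      qed
      then show ?thesis using g(1) gv by auto
    qed
  qed
qed

lemma mkp_inj:
  assumes "gvalid x r t e g" "gvalid x r t e g'" "mkp x r t e g = mkp x r t e g'"
    "x \<le> y" "y < x + r"
  shows "g y = g' y"
proof -
  have a: "(y, g y) \<in> set (mkp x r t e g)"
    using assms(1,4,5) unfolding mkp_set[OF assms(1)] gvalid_def by auto
  have b: "(y, g' y) \<in> set (mkp x r t e g')"
    using assms(2,4,5) unfolding mkp_set[OF assms(2)] gvalid_def by auto
  from a have "g' y \<le> g y" unfolding assms(3) mkp_set[OF assms(2)] using assms(4,5) by (auto split: if_splits)
  moreover from b have "g y \<le> g' y" unfolding assms(3)[symmetric] mkp_set[OF assms(1)] using assms(4,5) by (auto split: if_splits)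
  ultimately show ?thesis by simp
qed


definition GG :: "(nat \<Rightarrow> nat) \<Rightarrow> (nat \<Rightarrow> nat) \<Rightarrow> (nat \<Rightarrow> nat \<Rightarrow> nat) \<Rightarrow> nat \<Rightarrow> nat \<Rightarrow> nat" where
  "GG r t gk k p = (if p = 0 then t k else if p = Suc (r k) then Suc (r k) else gk k p)"

definition fpath :: "(nat \<Rightarrow> nat) \<Rightarrow> (nat \<Rightarrow> nat) \<Rightarrow> (nat \<Rightarrow> nat \<Rightarrow> nat) \<Rightarrow> nat \<Rightarrow> (nat \<times> nat) list" where
  "fpath r t gk k = mkp 1 (r k) (t k) (Suc (r k)) (gk k)"

lemma fpath_set:
  assumes "gvalid 1 (r k) (t k) (Suc (r k)) (gk k)"
  shows "(p, q) \<in> set (fpath r t gk k) \<longleftrightarrow>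
    1 \<le> p \<and> p \<le> Suc (r k) \<and> GG r t gk k p \<le> q \<and> q \<le> GG r t gk k (p - 1)"
  unfolding fpath_def mkp_set[OF assms] GG_def by auto

lemma GG_mono:
  assumes "gvalid 1 (r k) (t k) (Suc (r k)) (gk k)" "1 \<le> p" "p \<le> Suc (r k)"
  shows "GG r t gk k p \<le> GG r t gk k (p - 1)"
  using assms unfolding GG_def gvalid_def
  by (cases "p = 1"; cases "p = Suc (r k)") (auto simp: le_Suc_eq)

lemma GG_mono2:
  assumes "gvalid 1 (r k) (t k) (Suc (r k)) (gk k)" "p \<le> p'" "p' \<le> Suc (r k)"
  shows "GG r t gk k p' \<le> GG r t gk k p"
  using assms(2,3)
proof (induction p' rule: dec_induct)
  case base then show ?case by simp
next
  case (step n)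
  have "GG r t gk k (Suc n) \<le> GG r t gk k n"
    using GG_mono[where r=r and t=t and gk=gk, OF assms(1), of "Suc n"] step by simp
  then show ?case using step by simp
qed

lemma NI_from_interlace:
  assumes v: "\<And>k. k < l \<Longrightarrow> gvalid 1 (r k) (t k) (Suc (r k)) (gk k)"
    and rd: "\<And>i k. i < k \<Longrightarrow> k < l \<Longrightarrow> r k < r i"
    and il: "\<And>k p. Suc k < l \<Longrightarrow> 1 \<le> p \<Longrightarrow> p \<le> Suc (r (Suc k)) \<Longrightarrow>
               GG r t gk (Suc k) (p - 1) < GG r t gk k p"
    and ij: "i < l" "j < l" "i \<noteq> j"
  shows "set (fpath r t gk i) \<inter> set (fpath r t gk j) = {}"
proof -
  have gen: "\<And>p. 1 \<le> p \<Longrightarrow> p \<le> Suc (r (k + Suc d)) \<Longrightarrow> GG r t gk (k + Suc d) (p - 1) < GG r t gk k p"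
    if "k + Suc d < l" for k d
    using that
  proof (induction d)
    case 0 then show ?case using il[of k] by simp
  next
    case (Suc d)
    let ?k' = "k + Suc d"
    have "r (Suc ?k') < r ?k'" using rd[of ?k' "Suc ?k'"] Suc.prems by simp
    then have pk: "p \<le> Suc (r ?k')" using Suc.prems by simp
    have a: "GG r t gk (Suc ?k') (p - 1) < GG r t gk ?k' p"
      using il[of ?k' p] Suc.prems by simp
    have b: "GG r t gk ?k' p \<le> GG r t gk ?k' (p - 1)"
      using GG_mono[where r=r and t=t and gk=gk, OF v, of ?k' p] Suc.prems pk by simp
    have c: "GG r t gk ?k' (p - 1) < GG r t gk k p"
      using Suc.IH[of p] Suc.prems pk by simp
    show ?case using a b c by simp
  qed
  have main: "set (fpath r t gk k) \<inter> set (fpath r t gk k') = {}" if "k < k'" "k' < l" for k k'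
  proof -
    obtain d where d: "k' = k + Suc d" using \<open>k < k'\<close> less_iff_Suc_add by auto
    have rk: "r k' < r k" using rd that by simp
    { fix p q assume a: "(p, q) \<in> set (fpath r t gk k)" "(p, q) \<in> set (fpath r t gk k')"
      have kl: "k < l" using that by simp
      from a(2) have p: "1 \<le> p" "p \<le> Suc (r k')" "q \<le> GG r t gk k' (p - 1)"
        using fpath_set[where r=r and t=t and gk=gk, OF v[OF that(2)]] by auto
      from a(1) have "GG r t gk k p \<le> q" using fpath_set[where r=r and t=t and gk=gk, OF v[OF kl]] by auto
      moreover have "GG r t gk k' (p - 1) < GG r t gk k p" using gen[of k d p] d that p by simp
      ultimately have False using p by simp }
    then show ?thesis by auto
  qed
  show ?thesis
  proof (cases "i < j")
    case True then show ?thesis using main ij by simp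
  next
    case False then have "j < i" using ij by simp
    then show ?thesis using main[of j i] ij by (simp add: Int_commute)
  qed
qed

lemma interlace_from_NI:
  assumes v: "\<And>k. k < l \<Longrightarrow> gvalid 1 (r k) (t k) (Suc (r k)) (gk k)"
    and rd: "\<And>k. Suc k < l \<Longrightarrow> r (Suc k) < r k"
    and td: "\<And>k. Suc k < l \<Longrightarrow> t (Suc k) < t k"
    and dis: "\<And>k. Suc k < l \<Longrightarrow> set (fpath r t gk k) \<inter> set (fpath r t gk (Suc k)) = {}"
    and k: "Suc k < l"
  shows "\<And>p. 1 \<le> p \<Longrightarrow> p \<le> Suc (r (Suc k)) \<Longrightarrow> GG r t gk (Suc k) (p - 1) < GG r t gk k p"
proof -
  fix p assume p: "1 \<le> p" "p \<le> Suc (r (Suc k))"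
  have vk: "gvalid 1 (r k) (t k) (Suc (r k)) (gk k)" using v k by simp
  have vk1: "gvalid 1 (r (Suc k)) (t (Suc k)) (Suc (r (Suc k))) (gk (Suc k))" using v k by simp
  have rk: "r (Suc k) < r k" using rd k by simp
  show "GG r t gk (Suc k) (p - 1) < GG r t gk k p"
    using p
  proof (induction p rule: dec_induct)
    case base
    show ?case
    proof (rule ccontr)
      assume "\<not> ?case"
      then have le: "GG r t gk k 1 \<le> t (Suc k)" by (simp add: GG_def)
      have "t (Suc k) < t k" using td k by simp
      then have "(1, t (Suc k)) \<in> set (fpath r t gk k)"
        using le fpath_set[where r=r and t=t and gk=gk, OF vk] by (simp add: GG_def)
      moreover have "(1, t (Suc k)) \<in> set (fpath r t gk (Suc k))"
        using fpath_set[where r=r and t=t and gk=gk, OF vk1, of 1 "t (Suc k)"] GG_mono[where r=r and t=t and gk=gk, OF vk1, of 1] by (simp add: GG_def)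
      ultimately show False using dis[OF k] by blast
    qed
  next
    case (step n)
    have n1: "1 \<le> n" using step by simp
    have IH: "GG r t gk (Suc k) (n - 1) < GG r t gk k n" using step by simp
    show ?case
    proof (rule ccontr)
      assume "\<not> ?case"
      then have le: "GG r t gk k (Suc n) \<le> GG r t gk (Suc k) n" by simp
      have m1: "GG r t gk (Suc k) n \<le> GG r t gk (Suc k) (n - 1)"
        using GG_mono[where r=r and t=t and gk=gk, OF vk1, of n] n1 step by simp
      have "(Suc n, GG r t gk (Suc k) n) \<in> set (fpath r t gk k)"
        using fpath_set[where r=r and t=t and gk=gk, OF vk] le m1 IH step rk by simp
      moreover have "(Suc n, GG r t gk (Suc k) n) \<in> set (fpath r t gk (Suc k))"
        using fpath_set[where r=r and t=t and gk=gk, OF vk1] GG_mono[where r=r and t=t and gk=gk, OF vk1, of "Suc n"] step by simp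
      ultimately show False using dis[OF k] by blast
    qed
  qed
qed


definition partb :: "nat \<Rightarrow> (nat \<Rightarrow> nat) \<Rightarrow> bool" where
  "partb N \<mu> \<longleftrightarrow> \<mu> 0 = 0 \<and> (\<forall>i j. 1 \<le> i \<and> i \<le> j \<longrightarrow> \<mu> j \<le> \<mu> i) \<and> (\<forall>i>N. \<mu> i = 0)"

definition sdec :: "nat list \<Rightarrow> bool" where
  "sdec xs \<longleftrightarrow> (\<forall>i j. i < j \<and> j < length xs \<longrightarrow> xs ! j < xs ! i)"

lemma down_card0:
  assumes "finite S" "\<And>i j. j \<in> S \<Longrightarrow> i \<le> j \<Longrightarrow> i \<in> S"
  shows "j \<in> S \<longleftrightarrow> j < card S"
proof
  assume "j \<in> S"
  then have "{..j} \<subseteq> S" using assms(2) by blast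
  then have "card {..j} \<le> card S" using assms(1) card_mono by blast
  then show "j < card S" by simp
next
  assume j: "j < card S"
  show "j \<in> S"
  proof (rule ccontr)
    assume nj: "j \<notin> S"
    have "S \<subseteq> {..<j}"
    proof
      fix x assume "x \<in> S"
      then have "\<not> j \<le> x" using assms(2) nj by blast
      then show "x \<in> {..<j}" by simp
    qed
    then have "card S \<le> card {..<j}" by (rule card_mono[rotated]) simp
    then show False using j by simp
  qed
qed

lemma down_card1:
  assumes "finite S" "\<And>j. j \<in> S \<Longrightarrow> 1 \<le> j" "\<And>i j. j \<in> S \<Longrightarrow> 1 \<le> i \<Longrightarrow> i \<le> j \<Longrightarrow> i \<in> S"
  shows "j \<in> S \<longleftrightarrow> 1 \<le> j \<and> j \<le> card S"
proof
  assume js: "j \<in> S"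
  then have "{1..j} \<subseteq> S" using assms(3)[OF js] by auto
  then have "card {1..j} \<le> card S" using assms(1) card_mono by blast
  then show "1 \<le> j \<and> j \<le> card S" using assms(2)[OF js] by simp
next
  assume j: "1 \<le> j \<and> j \<le> card S"
  show "j \<in> S"
  proof (rule ccontr)
    assume nj: "j \<notin> S"
    have "S \<subseteq> {1..<j}"
    proof
      fix x assume xs: "x \<in> S"
      then have "\<not> j \<le> x" using assms(3)[OF xs] nj j by blast
      then show "x \<in> {1..<j}" using assms(2)[OF xs] by simp
    qed
    then have "card S \<le> card {1..<j}" by (rule card_mono[rotated]) simp
    then show False using j by simp linarith
  qed
qed

context
  fixes N :: nat and \<mu> :: "nat \<Rightarrow> nat"
  assumes P: "partb N \<mu>"
begin

lemma p0: "\<mu> 0 = 0" using P by (simp add: partb_def)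
lemma pmono: "1 \<le> i \<Longrightarrow> i \<le> j \<Longrightarrow> \<mu> j \<le> \<mu> i" using P by (simp add: partb_def)
lemma pzero: "N < i \<Longrightarrow> \<mu> i = 0" using P by (simp add: partb_def)

lemma conj_set_finite: "1 \<le> k \<Longrightarrow> finite {i. 1 \<le> i \<and> k \<le> \<mu> i}"
proof -
  assume "1 \<le> k"
  have "{i. 1 \<le> i \<and> k \<le> \<mu> i} \<subseteq> {..N}"
  proof
    fix x assume "x \<in> {i. 1 \<le> i \<and> k \<le> \<mu> i}"
    then have "\<mu> x \<noteq> 0" using \<open>1 \<le> k\<close> by auto
    then have "\<not> N < x" using pzero by auto
    then show "x \<in> {..N}" by simp
  qed
  then show ?thesis using finite_subset by blast
qed

lemma galois: "1 \<le> i \<Longrightarrow> 1 \<le> k \<Longrightarrow> k \<le> \<mu> i \<longleftrightarrow> i \<le> conj_part \<mu> k"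
proof -
  assume i: "1 \<le> i" and k: "1 \<le> k"
  have "i \<in> {i. 1 \<le> i \<and> k \<le> \<mu> i} \<longleftrightarrow> 1 \<le> i \<and> i \<le> card {i. 1 \<le> i \<and> k \<le> \<mu> i}"
    by (rule down_card1) (use conj_set_finite[OF k] pmono in \<open>auto intro: order_trans\<close>)
  then show ?thesis using i k by (simp add: conj_part_def)
qed

lemma conj_partb: "partb (\<mu> 1) (conj_part \<mu>)"
  unfolding partb_def
proof (intro conjI allI impI)
  show "conj_part \<mu> 0 = 0" by (simp add: conj_part_def)
  fix i j :: nat assume ij: "1 \<le> i \<and> i \<le> j"
  have "{x. 1 \<le> x \<and> j \<le> \<mu> x} \<subseteq> {x. 1 \<le> x \<and> i \<le> \<mu> x}" using ij by auto
  then have "card {x. 1 \<le> x \<and> j \<le> \<mu> x} \<le> card {x. 1 \<le> x \<and> i \<le> \<mu> x}"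
    using ij conj_set_finite[of i] card_mono by blast
  then show "conj_part \<mu> j \<le> conj_part \<mu> i" using ij by (simp add: conj_part_def)
next
  fix i assume i: "\<mu> 1 < i"
  have e: "{x. 1 \<le> x \<and> i \<le> \<mu> x} = {}"
  proof (rule Set.set_eqI)
    fix x
    show "x \<in> {x. 1 \<le> x \<and> i \<le> \<mu> x} \<longleftrightarrow> x \<in> {}"
      using pmono[of 1 x] i by auto
  qed
  show "conj_part \<mu> i = 0" unfolding conj_part_def e by simp
qed

lemma conj_conj: "conj_part (conj_part \<mu>) = \<mu>"
proof
  fix i show "conj_part (conj_part \<mu>) i = \<mu> i"
  proof (cases "i = 0")
    case True then show ?thesis by (simp add: conj_part_def p0)
  next
    case False
    have "{k. 1 \<le> k \<and> i \<le> conj_part \<mu> k} = {1..\<mu> i}"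
    proof (rule Set.set_eqI)
      fix k
      show "k \<in> {k. 1 \<le> k \<and> i \<le> conj_part \<mu> k} \<longleftrightarrow> k \<in> {1..\<mu> i}"
        using galois[of i k] False by auto
    qed
    then show ?thesis using False by (simp add: conj_part_def)
  qed
qed

lemma durfee_char: "1 \<le> i \<Longrightarrow> i \<le> \<mu> i \<longleftrightarrow> i \<le> durfee \<mu>"
proof -
  assume i: "1 \<le> i"
  let ?S = "{i. 1 \<le> i \<and> i \<le> \<mu> i}"
  have fin: "finite ?S"
  proof -
    have "?S \<subseteq> {..N}"
    proof
      fix x assume "x \<in> ?S"
      then have "\<mu> x \<noteq> 0" by auto
      then have "\<not> N < x" using pzero by auto
      then show "x \<in> {..N}" by simp
    qed
    then show ?thesis using finite_subset by blast
  qed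
  have ch: "\<And>j. j \<in> ?S \<longleftrightarrow> 1 \<le> j \<and> j \<le> card ?S"
  proof (rule down_card1[OF fin])
    fix i j assume "j \<in> ?S" "1 \<le> i" "i \<le> j"
    then show "i \<in> ?S" using pmono[of i j] by auto
  qed auto
  have "{0} \<union> ?S = {0..card ?S}"
  proof (rule Set.set_eqI)
    fix x show "x \<in> {0} \<union> ?S \<longleftrightarrow> x \<in> {0..card ?S}" using ch[of x] by auto
  qed
  moreover have "Max {0..card ?S} = card ?S" by (rule Max_eqI) auto
  ultimately have "durfee \<mu> = card ?S" unfolding durfee_def by simp
  then show ?thesis using ch[of i] i by simp
qed

lemma durfee_bound: "durfee \<mu> \<le> \<mu> 1"
proof (cases "durfee \<mu> = 0")
  case True then show ?thesis by simp
next
  case False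
  then have "durfee \<mu> \<le> \<mu> (durfee \<mu>)" using durfee_char[of "durfee \<mu>"] by simp
  also have "\<dots> \<le> \<mu> 1" using pmono[of 1 "durfee \<mu>"] False by simp
  finally show ?thesis .
qed

lemma after_durfee: "durfee \<mu> < i \<Longrightarrow> \<mu> i \<le> durfee \<mu>"
proof -
  assume i: "durfee \<mu> < i"
  have "\<not> Suc (durfee \<mu>) \<le> \<mu> (Suc (durfee \<mu>))" using durfee_char[of "Suc (durfee \<mu>)"] by simp
  moreover have "\<mu> i \<le> \<mu> (Suc (durfee \<mu>))" using pmono[of "Suc (durfee \<mu>)" i] i by simp
  ultimately show ?thesis by simp
qed

lemma frob_a_nth: "k < durfee \<mu> \<Longrightarrow> frob_a \<mu> ! k = \<mu> (Suc k) - Suc k"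
  unfolding frob_a_def by (simp del: upt_Suc add: nth_map)

lemma frob_b_nth: "k < durfee \<mu> \<Longrightarrow> frob_b \<mu> ! k = conj_part \<mu> (Suc k) - Suc k"
  unfolding frob_b_def by (simp del: upt_Suc add: nth_map)

lemma frob_a_len: "length (frob_a \<mu>) = durfee \<mu>" unfolding frob_a_def by simp
lemma frob_b_len: "length (frob_b \<mu>) = durfee \<mu>" unfolding frob_b_def by simp

lemma from_frob_frob: "from_frob (frob_a \<mu>) (frob_b \<mu>) = \<mu>"
proof
  fix i
  let ?l = "durfee \<mu>"
  show "from_frob (frob_a \<mu>) (frob_b \<mu>) i = \<mu> i"
  proof (cases "i = 0")
    case True then show ?thesis by (simp add: from_frob_def p0)
  next
    case i0: False
    show ?thesis
    proof (cases "i \<le> ?l")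
      case True
      have "i \<le> \<mu> i" using durfee_char[of i] True i0 by simp
      then show ?thesis using True i0 by (simp add: from_frob_def frob_a_len frob_a_nth)
    next
      case False
      have mu: "\<mu> i \<le> ?l" using after_durfee False by simp
      have "{j. j < length (frob_a \<mu>) \<and> i \<le> frob_b \<mu> ! j + (j + 1)} = {..<\<mu> i}"
      proof (rule Set.set_eqI)
        fix j
        show "j \<in> {j. j < length (frob_a \<mu>) \<and> i \<le> frob_b \<mu> ! j + (j + 1)} \<longleftrightarrow> j \<in> {..<\<mu> i}"
        proof (cases "j < ?l")
          case True
          have c: "Suc j \<le> conj_part \<mu> (Suc j)"
            using galois[of "Suc j" "Suc j"] durfee_char[of "Suc j"] True by simp
          have "i \<le> frob_b \<mu> ! j + (j + 1) \<longleftrightarrow> i \<le> conj_part \<mu> (Suc j)"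
            using c True by (simp add: frob_b_nth)
          also have "\<dots> \<longleftrightarrow> Suc j \<le> \<mu> i" using galois[of i "Suc j"] i0 by simp
          finally show ?thesis using True by (simp add: frob_a_len Suc_le_eq)
        next
          case False
          then show ?thesis using mu by (simp add: frob_a_len)
        qed
      qed
      then show ?thesis using False i0 by (simp add: from_frob_def frob_a_len)
    qed
  qed
qed

lemma frob_a_sdec: "sdec (frob_a \<mu>)"
  unfolding sdec_def
proof (intro allI impI)
  fix i j assume ij: "i < j \<and> j < length (frob_a \<mu>)"
  then have jl: "j < durfee \<mu>" by (simp add: frob_a_len)
  have a: "Suc j \<le> \<mu> (Suc j)" using durfee_char[of "Suc j"] jl by simp
  have b: "\<mu> (Suc j) \<le> \<mu> (Suc i)" using pmono[of "Suc i" "Suc j"] ij by simp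
  have "frob_a \<mu> ! j = \<mu> (Suc j) - Suc j" "frob_a \<mu> ! i = \<mu> (Suc i) - Suc i"
    using ij jl by (simp_all add: frob_a_nth)
  then show "frob_a \<mu> ! j < frob_a \<mu> ! i"
    using a b ij by linarith
qed

end

lemma eq_by_le1:
  fixes x y :: nat
  assumes "\<And>i. 1 \<le> i \<Longrightarrow> i \<le> x \<longleftrightarrow> i \<le> y"
  shows "x = y"
proof (rule ccontr)
  assume "x \<noteq> y"
  then consider "x < y" | "y < x" by linarith
  then show False
  proof cases
    case 1 then show False using assms[of y] by simp
  next
    case 2 then show False using assms[of x] by simp
  qed
qed

lemma durfee_conj: "partb N \<mu> \<Longrightarrow> durfee (conj_part \<mu>) = durfee \<mu>"
proof (rule eq_by_le1)
  fix i :: nat assume P: "partb N \<mu>" and i: "1 \<le> i"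
  have "i \<le> durfee (conj_part \<mu>) \<longleftrightarrow> i \<le> conj_part \<mu> i"
    using durfee_char[OF conj_partb[OF P] i] by simp
  also have "\<dots> \<longleftrightarrow> i \<le> \<mu> i" using galois[OF P i i] by simp
  also have "\<dots> \<longleftrightarrow> i \<le> durfee \<mu>" using durfee_char[OF P i] by simp
  finally show "i \<le> durfee (conj_part \<mu>) \<longleftrightarrow> i \<le> durfee \<mu>" .
qed

lemma frob_a_conj: "partb N \<mu> \<Longrightarrow> frob_a (conj_part \<mu>) = frob_b \<mu>"
  unfolding frob_a_def frob_b_def by (simp add: durfee_conj)

lemma frob_b_conj: "partb N \<mu> \<Longrightarrow> frob_b (conj_part \<mu>) = frob_a \<mu>"
  unfolding frob_a_def frob_b_def by (simp add: durfee_conj conj_conj)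

lemma frob_b_sdec: "partb N \<mu> \<Longrightarrow> sdec (frob_b \<mu>)"
  using frob_a_sdec[OF conj_partb] frob_a_conj by metis


lemma sdec_ge:
  assumes "sdec xs" "j < length xs" "i \<le> j"
  shows "xs ! j + (j - i) \<le> xs ! i"
  using assms(3,2)
proof (induction j rule: dec_induct)
  case base then show ?case by simp
next
  case (step n)
  have "xs ! Suc n < xs ! n" using step.prems step.hyps assms(1) unfolding sdec_def by auto
  moreover have "xs ! n + (n - i) \<le> xs ! i" using step by simp
  ultimately show ?case using step.hyps by simp
qed

context
  fixes a b :: "nat list" and l :: nat
  assumes sa: "sdec a" and sb: "sdec b" and la: "length a = l" and lb: "length b = l"
begin

abbreviation "mu \<equiv> from_frob a b"

lemma a_ge: "j < l \<Longrightarrow> l - Suc j \<le> a ! j"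
proof -
  assume j: "j < l"
  have "a ! (l - 1) + (l - 1 - j) \<le> a ! j" using sdec_ge[OF sa, of "l - 1" j] la j by simp
  then show ?thesis by simp
qed

lemma b_ge: "j < l \<Longrightarrow> l - Suc j \<le> b ! j"
proof -
  assume j: "j < l"
  have "b ! (l - 1) + (l - 1 - j) \<le> b ! j" using sdec_ge[OF sb, of "l - 1" j] lb j by simp
  then show ?thesis by simp
qed

lemma mu_le: "1 \<le> i \<Longrightarrow> i \<le> l \<Longrightarrow> mu i = a ! (i - 1) + i"
  unfolding from_frob_def using la by simp

lemma mu_gt: "l < i \<Longrightarrow> mu i = card {j. j < l \<and> i \<le> b ! j + (j + 1)}"
  unfolding from_frob_def using la by simp

lemma mu_ge_l: "1 \<le> i \<Longrightarrow> i \<le> l \<Longrightarrow> l \<le> mu i"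
proof -
  assume i: "1 \<le> i" "i \<le> l"
  have "l - Suc (i - 1) \<le> a ! (i - 1)" using a_ge[of "i - 1"] i by simp
  then show ?thesis using mu_le[OF i] i by simp
qed

lemma S_fin: "finite {j. j < l \<and> i \<le> b ! j + (j + 1)}" by simp

lemma S_down: "j \<in> {j. j < l \<and> i \<le> b ! j + (j + 1)} \<Longrightarrow> j' \<le> j \<Longrightarrow> j' \<in> {j. j < l \<and> i \<le> b ! j + (j + 1)}"
  using sdec_ge[OF sb, of j j'] lb by auto

lemma mu_gt_le: "l < i \<Longrightarrow> mu i \<le> l"
proof -
  assume "l < i"
  have "card {j. j < l \<and> i \<le> b ! j + (j + 1)} \<le> card {..<l}" by (rule card_mono) auto
  then show ?thesis using mu_gt \<open>l < i\<close> by simp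
qed

lemma mu_mono: "1 \<le> i \<Longrightarrow> i \<le> i' \<Longrightarrow> mu i' \<le> mu i"
proof -
  assume i: "1 \<le> i" "i \<le> i'"
  show ?thesis
  proof (cases "i' \<le> l")
    case True
    have "a ! (i' - 1) + (i' - 1 - (i - 1)) \<le> a ! (i - 1)"
      using sdec_ge[OF sa, of "i' - 1" "i - 1"] la True i by simp
    then show ?thesis using mu_le[of i] mu_le[of i'] True i by simp
  next
    case False
    show ?thesis
    proof (cases "i \<le> l")
      case True then show ?thesis using mu_ge_l[of i] mu_gt_le[of i'] False i by simp
    next
      case F2: False
      have "{j. j < l \<and> i' \<le> b ! j + (j + 1)} \<subseteq> {j. j < l \<and> i \<le> b ! j + (j + 1)}" using i by auto
      then have "card {j. j < l \<and> i' \<le> b ! j + (j + 1)} \<le> card {j. j < l \<and> i \<le> b ! j + (j + 1)}"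
        by (rule card_mono[rotated]) simp
      then show ?thesis using mu_gt F2 False by simp
    qed
  qed
qed

lemma mu_partb: "partb (l + (if l = 0 then 0 else b ! 0)) mu"
  unfolding partb_def
proof (intro conjI allI impI)
  show "mu 0 = 0" by (simp add: from_frob_def)
  fix i j :: nat assume "1 \<le> i \<and> i \<le> j" then show "mu j \<le> mu i" using mu_mono by simp
next
  fix i assume i: "l + (if l = 0 then 0 else b ! 0) < i"
  have e: "{j. j < l \<and> i \<le> b ! j + (j + 1)} = {}"
  proof (rule Set.set_eqI)
    fix j
    show "j \<in> {j. j < l \<and> i \<le> b ! j + (j + 1)} \<longleftrightarrow> j \<in> {}"
    proof (cases "j < l")
      case True
      have "b ! j + (j - 0) \<le> b ! 0" using sdec_ge[OF sb, of j 0] lb True by simp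
      then show ?thesis using i True by auto
    qed simp
  qed
  have "l < i" using i by (simp split: if_splits)
  then show "mu i = 0" using mu_gt e by simp
qed

lemma mu_durfee: "durfee mu = l"
proof -
  note P = mu_partb
  have "\<And>i. 1 \<le> i \<Longrightarrow> i \<le> durfee mu \<longleftrightarrow> i \<le> l"
  proof -
    fix i :: nat assume i: "1 \<le> i"
    have "i \<le> durfee mu \<longleftrightarrow> i \<le> mu i" using durfee_char[OF P i] by simp
    also have "\<dots> \<longleftrightarrow> i \<le> l"
    proof (cases "i \<le> l")
      case True then show ?thesis using mu_le[OF i True] by simp
    next
      case False then show ?thesis using mu_gt_le[of i] by simp
    qed
    finally show "i \<le> durfee mu \<longleftrightarrow> i \<le> l" .
  qed
  then show ?thesis by (rule eq_by_le1)
qed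

lemma mu_frob_a: "frob_a mu = a"
proof (rule nth_equalityI)
  show "length (frob_a mu) = length a" using frob_a_len[OF mu_partb] mu_durfee la by simp
  fix k assume "k < length (frob_a mu)"
  then have k: "k < l" using frob_a_len[OF mu_partb] mu_durfee by simp
  show "frob_a mu ! k = a ! k"
    using frob_a_nth[OF mu_partb, of k] mu_durfee k mu_le[of "Suc k"] by simp
qed

lemma mu_frob_b: "frob_b mu = b"
proof (rule nth_equalityI)
  show "length (frob_b mu) = length b" using frob_b_len[OF mu_partb] mu_durfee lb by simp
  fix k assume "k < length (frob_b mu)"
  then have k: "k < l" using frob_b_len[OF mu_partb] mu_durfee by simp
  have c: "conj_part mu (Suc k) = b ! k + Suc k"
  proof (rule eq_by_le1)
    fix i :: nat assume i: "1 \<le> i"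
    have "i \<le> conj_part mu (Suc k) \<longleftrightarrow> Suc k \<le> mu i" using galois[OF mu_partb i, of "Suc k"] by simp
    also have "\<dots> \<longleftrightarrow> i \<le> b ! k + Suc k"
    proof (cases "i \<le> l")
      case True
      have "Suc k \<le> mu i" using mu_ge_l[OF i True] k by simp
      moreover have "i \<le> b ! k + Suc k" using b_ge[OF k] True k by simp
      ultimately show ?thesis by simp
    next
      case False
      have "Suc k \<le> mu i \<longleftrightarrow> k < card {j. j < l \<and> i \<le> b ! j + (j + 1)}" using mu_gt False by (simp add: Suc_le_eq)
      also have "\<dots> \<longleftrightarrow> k \<in> {j. j < l \<and> i \<le> b ! j + (j + 1)}"
        using down_card0[OF S_fin, of i k] S_down by blast
      also have "\<dots> \<longleftrightarrow> i \<le> b ! k + Suc k" using k by simp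
      finally show ?thesis .
    qed
    finally show "i \<le> conj_part mu (Suc k) \<longleftrightarrow> i \<le> b ! k + Suc k" .
  qed
  show "frob_b mu ! k = b ! k"
    using frob_b_nth[OF mu_partb, of k] mu_durfee k c by simp
qed

end


lemma sdec_map_Suc: "sdec xs \<Longrightarrow> sdec (map Suc xs)"
  unfolding sdec_def by auto

lemma sdec_map_pred: "sdec xs \<Longrightarrow> (\<forall>k<length xs. 1 \<le> xs ! k) \<Longrightarrow> sdec (map (\<lambda>x. x - 1) xs)"
  unfolding sdec_def by (auto simp: less_diff_conv)

lemma pi_equiv:
  assumes Pd: "partb N d" and Pl: "partb M lam"
    and ab: "\<forall>k < length (frob_a lam). frob_a lam ! k < frob_b lam ! k"
  shows "from_frob (frob_b d) (map Suc (frob_a d)) = lam \<longleftrightarrow>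
         d = from_frob (map (\<lambda>x. x - 1) (frob_b lam)) (frob_a lam)"
proof -
  let ?a = "frob_a lam" and ?b = "frob_b lam" and ?l = "durfee lam"
  let ?b' = "map (\<lambda>x. x - 1) ?b"
  have sa: "sdec ?a" using frob_a_sdec[OF Pl] .
  have sb: "sdec ?b" using frob_b_sdec[OF Pl] .
  have la: "length ?a = ?l" using frob_a_len[OF Pl] .
  have lb: "length ?b = ?l" using frob_b_len[OF Pl] .
  have b1: "\<forall>k<length ?b. 1 \<le> ?b ! k" using ab la lb by (metis less_one not_le not_less0 order.strict_trans1)
  have sb': "sdec ?b'" using sdec_map_pred[OF sb b1] .
  have bb: "map Suc ?b' = ?b"
    by (rule nth_equalityI) (use b1 in auto)
  let ?fa = "frob_a d" and ?fb = "frob_b d" and ?ld = "durfee d"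
  have sfa: "sdec ?fa" using frob_a_sdec[OF Pd] .
  have sfb: "sdec ?fb" using frob_b_sdec[OF Pd] .
  have lfa: "length ?fa = ?ld" using frob_a_len[OF Pd] .
  have lfb: "length ?fb = ?ld" using frob_b_len[OF Pd] .
  show ?thesis
  proof
    assume L: "from_frob ?fb (map Suc ?fa) = lam"
    have e1: "frob_a lam = ?fb"
      using mu_frob_a[OF sfb sdec_map_Suc[OF sfa] lfb] lfa L by simp
    have e2: "frob_b lam = map Suc ?fa"
      using mu_frob_b[OF sfb sdec_map_Suc[OF sfa] lfb] lfa L by simp
    have "?b' = ?fa" unfolding e2 by (simp add: comp_def)
    then show "d = from_frob ?b' ?a" using from_frob_frob[OF Pd] e1 by simp
  next
    assume D: "d = from_frob ?b' ?a"
    have e1: "?fa = ?b'" using mu_frob_a[OF sb' sa _ la] lb D by simp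
    have e2: "?fb = ?a" using mu_frob_b[OF sb' sa _ la] lb D by simp
    show "from_frob ?fb (map Suc ?fa) = lam"
      unfolding e1 e2 bb using from_frob_frob[OF Pl] .
  qed
qed


lemma sym_sorted:
  fixes R :: "nat \<Rightarrow> nat \<Rightarrow> nat \<Rightarrow> bool"
  assumes s1: "\<And>x y z. R x y z \<Longrightarrow> R y x z" and s2: "\<And>x y z. R x y z \<Longrightarrow> R x z y"
    and srt: "\<And>i j k. i \<le> j \<Longrightarrow> j \<le> k \<Longrightarrow> R i j k"
  shows "R x y z"
proof -
  consider "x \<le> y" "y \<le> z" | "y \<le> x" "x \<le> z" | "x \<le> z" "z \<le> y" | "z \<le> x" "x \<le> y"
    | "y \<le> z" "z \<le> x" | "z \<le> y" "y \<le> x" by linarith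
  then show ?thesis
  proof cases
    case 1 then show ?thesis using srt by blast
  next
    case 2 then show ?thesis using srt s1 by blast
  next
    case 3 then show ?thesis using srt s2 by blast
  next
    case 4 then have "R z x y" using srt by blast
    then have "R x z y" using s1 by blast
    then show ?thesis using s2 by blast
  next
    case 5 then have "R y z x" using srt by blast
    then have "R y x z" using s2 by blast
    then show ?thesis using s1 by blast
  next
    case 6 then have "R z y x" using srt by blast
    then have "R z x y" using s2 by blast
    then have "R x z y" using s1 by blast
    then show ?thesis using s2 by blast
  qed
qed

lemma perm_image:
  assumes "\<And>v. v \<in> W \<Longrightarrow> \<sigma> v \<in> W" "\<And>v. v \<in> W \<Longrightarrow> \<tau> v \<in> W" "\<And>v. \<sigma> (\<tau> v) = v"
  shows "\<sigma> ` W = W"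
proof
  show "\<sigma> ` W \<subseteq> W" using assms(1) by blast
  show "W \<subseteq> \<sigma> ` W"
  proof
    fix v assume "v \<in> W"
    then have "\<tau> v \<in> W" using assms(2) by blast
    then show "v \<in> \<sigma> ` W" using assms(3)[of v] by (metis imageI)
  qed
qed

lemma perm_image3:
  fixes W :: "(nat \<times> nat \<times> nat) set"
  assumes "\<And>a b c. (a, b, c) \<in> W \<Longrightarrow> f (a, b, c) \<in> W"
    and "\<And>a b c. (a, b, c) \<in> W \<Longrightarrow> g (a, b, c) \<in> W"
    and "\<And>a b c. f (g (a, b, c)) = (a, b, c)"
  shows "f ` W = W"
proof (rule perm_image[where \<tau> = g])
  fix v assume "v \<in> W"
  then show "f v \<in> W" using assms(1) by (cases v rule: prod_cases3) simp
next
  fix v assume "v \<in> W"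
  then show "g v \<in> W" using assms(2) by (cases v rule: prod_cases3) simp
next
  fix v show "f (g v) = v" using assms(3) by (cases v rule: prod_cases3) simp
qed

lemma sym_W_perms:
  fixes W :: "(nat \<times> nat \<times> nat) set"
  assumes w1: "\<And>a b c. (a, b, c) \<in> W \<Longrightarrow> (b, a, c) \<in> W"
    and w2: "\<And>a b c. (a, b, c) \<in> W \<Longrightarrow> (a, c, b) \<in> W"
  shows "\<forall>\<sigma>\<in>coord_perms. \<sigma> ` W = W"
proof -
  have c1: "(b, c, a) \<in> W" if "(a, b, c) \<in> W" for a b c using w2[OF w1[OF that]] .
  have c2: "(c, a, b) \<in> W" if "(a, b, c) \<in> W" for a b c using w1[OF w2[OF that]] .
  have c3: "(c, b, a) \<in> W" if "(a, b, c) \<in> W" for a b c using w1[OF w2[OF w1[OF that]]] .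
  have p1: "(\<lambda>(x, y, z). (x, y, z)) ` W = W"
    apply (rule perm_image3[where g = "\<lambda>(x, y, z). (x, y, z)"])
      apply (simp only: prod.case)
     apply (simp only: prod.case)
    apply simp
    done
  have p2: "(\<lambda>(x, y, z). (x, z, y)) ` W = W"
    apply (rule perm_image3[where g = "\<lambda>(x, y, z). (x, z, y)"])
      apply (simp only: prod.case, erule w2)
     apply (simp only: prod.case, erule w2)
    apply simp
    done
  have p3: "(\<lambda>(x, y, z). (y, x, z)) ` W = W"
    apply (rule perm_image3[where g = "\<lambda>(x, y, z). (y, x, z)"])
      apply (simp only: prod.case, erule w1)
     apply (simp only: prod.case, erule w1)
    apply simp
    done
  have p4: "(\<lambda>(x, y, z). (y, z, x)) ` W = W"
    apply (rule perm_image3[where g = "\<lambda>(x, y, z). (z, x, y)"])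
      apply (simp only: prod.case, erule c1)
     apply (simp only: prod.case, erule c2)
    apply simp
    done
  have p5: "(\<lambda>(x, y, z). (z, x, y)) ` W = W"
    apply (rule perm_image3[where g = "\<lambda>(x, y, z). (y, z, x)"])
      apply (simp only: prod.case, erule c2)
     apply (simp only: prod.case, erule c1)
    apply simp
    done
  have p6: "(\<lambda>(x, y, z). (z, y, x)) ` W = W"
    apply (rule perm_image3[where g = "\<lambda>(x, y, z). (z, y, x)"])
      apply (simp only: prod.case, erule c3)
     apply (simp only: prod.case, erule c3)
    apply simp
    done
  show ?thesis unfolding coord_perms_def Ball_def insert_iff empty_iff
  proof (intro allI impI)
    fix \<sigma> :: "nat \<times> nat \<times> nat \<Rightarrow> nat \<times> nat \<times> nat"
    assume "\<sigma> = (\<lambda>(x, y, z). (x, y, z)) \<or> \<sigma> = (\<lambda>(x, y, z). (x, z, y)) \<or> \<sigma> = (\<lambda>(x, y, z). (y, x, z)) \<or>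
      \<sigma> = (\<lambda>(x, y, z). (y, z, x)) \<or> \<sigma> = (\<lambda>(x, y, z). (z, x, y)) \<or> \<sigma> = (\<lambda>(x, y, z). (z, y, x)) \<or> False"
    then show "\<sigma> ` W = W"
    proof (elim disjE)
      assume "\<sigma> = (\<lambda>(x, y, z). (x, y, z))" then show ?thesis using p1 by simp
    next
      assume "\<sigma> = (\<lambda>(x, y, z). (x, z, y))" then show ?thesis using p2 by simp
    next
      assume "\<sigma> = (\<lambda>(x, y, z). (y, x, z))" then show ?thesis using p3 by simp
    next
      assume "\<sigma> = (\<lambda>(x, y, z). (y, z, x))" then show ?thesis using p4 by simp
    next
      assume "\<sigma> = (\<lambda>(x, y, z). (z, x, y))" then show ?thesis using p5 by simp
    next
      assume "\<sigma> = (\<lambda>(x, y, z). (z, y, x))" then show ?thesis using p6 by simp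
    qed simp
  qed
qed

lemma pp_cells_mem: "(x, y, z) \<in> pp_cells m T \<longleftrightarrow> 1 \<le> x \<and> x \<le> m \<and> 1 \<le> y \<and> y \<le> m \<and> 1 \<le> z \<and> z \<le> T x y"
  unfolding pp_cells_def by simp

lemma tspp_pp: "T \<in> TSPP m \<Longrightarrow> plane_partition_box m T"
  unfolding TSPP_def by simp

lemma tspp_swap:
  assumes "T \<in> TSPP m" "(x, y, z) \<in> pp_cells m T"
  shows "(y, x, z) \<in> pp_cells m T" "(x, z, y) \<in> pp_cells m T"
proof -
  have i1: "(\<lambda>(x, y, z). (y, x, z)) ` pp_cells m T = pp_cells m T"
    and i2: "(\<lambda>(x, y, z). (x, z, y)) ` pp_cells m T = pp_cells m T"
  proof -
    have m1: "(\<lambda>(x::nat, y::nat, z::nat). (y, x, z)) \<in> coord_perms" unfolding coord_perms_def by blast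
    have m2: "(\<lambda>(x::nat, y::nat, z::nat). (x, z, y)) \<in> coord_perms" unfolding coord_perms_def by blast
    have "\<forall>\<sigma>\<in>coord_perms. \<sigma> ` pp_cells m T = pp_cells m T" using assms(1) unfolding TSPP_def by blast
    then show "(\<lambda>(x, y, z). (y, x, z)) ` pp_cells m T = pp_cells m T"
      "(\<lambda>(x, y, z). (x, z, y)) ` pp_cells m T = pp_cells m T" using m1 m2 by blast+
  qed
  have "(\<lambda>(x, y, z). (y, x, z)) (x, y, z) \<in> (\<lambda>(x, y, z). (y, x, z)) ` pp_cells m T"
    using assms(2) by (rule imageI)
  then show "(y, x, z) \<in> pp_cells m T" unfolding i1 by simp
  have "(\<lambda>(x, y, z). (x, z, y)) (x, y, z) \<in> (\<lambda>(x, y, z). (x, z, y)) ` pp_cells m T"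
    using assms(2) by (rule imageI)
  then show "(x, z, y) \<in> pp_cells m T" unfolding i2 by simp
qed

lemma tspp_sym:
  assumes "T \<in> TSPP m"
  shows "T x y = T y x"
proof -
  have pp: "plane_partition_box m T" using tspp_pp[OF assms] .
  show ?thesis
  proof (cases "1 \<le> x \<and> x \<le> m \<and> 1 \<le> y \<and> y \<le> m")
    case False then show ?thesis using pp unfolding plane_partition_box_def by auto
  next
    case True
    have le: "T a b \<le> T b a" if "1 \<le> a" "a \<le> m" "1 \<le> b" "b \<le> m" for a b
    proof (cases "T a b = 0")
      case True then show ?thesis by simp
    next
      case False
      have "T a b \<le> m" using pp unfolding plane_partition_box_def by auto
      then have "(a, b, T a b) \<in> pp_cells m T" using that False by (simp add: pp_cells_mem)
      then have "(b, a, T a b) \<in> pp_cells m T" by (rule tspp_swap(1)[OF assms])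
      then show ?thesis by (simp add: pp_cells_mem)
    qed
    show ?thesis using le[of x y] le[of y x] True by simp
  qed
qed

lemma tspp_mem23:
  assumes "T \<in> TSPP m" "1 \<le> x" "x \<le> m" "1 \<le> y" "y \<le> m" "1 \<le> z" "z \<le> m"
  shows "z \<le> T x y \<longleftrightarrow> y \<le> T x z"
proof
  assume "z \<le> T x y"
  then have "(x, y, z) \<in> pp_cells m T" using assms by (simp add: pp_cells_mem)
  then have "(x, z, y) \<in> pp_cells m T" by (rule tspp_swap(2)[OF assms(1)])
  then show "y \<le> T x z" by (simp add: pp_cells_mem)
next
  assume "y \<le> T x z"
  then have "(x, z, y) \<in> pp_cells m T" using assms by (simp add: pp_cells_mem)
  then have "(x, y, z) \<in> pp_cells m T" by (rule tspp_swap(2)[OF assms(1)])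
  then show "z \<le> T x y" by (simp add: pp_cells_mem)
qed

definition mkT :: "nat \<Rightarrow> (nat \<Rightarrow> nat \<Rightarrow> nat \<Rightarrow> bool) \<Rightarrow> nat \<Rightarrow> nat \<Rightarrow> nat" where
  "mkT m Q x y = (if 1 \<le> x \<and> x \<le> m \<and> 1 \<le> y \<and> y \<le> m then card {z. 1 \<le> z \<and> z \<le> m \<and> Q x y z} else 0)"

lemma mkT_char:
  assumes dz: "\<And>x y z z'. Q x y z \<Longrightarrow> 1 \<le> z' \<Longrightarrow> z' \<le> z \<Longrightarrow> Q x y z'"
    and "1 \<le> x" "x \<le> m" "1 \<le> y" "y \<le> m" "1 \<le> z" "z \<le> m"
  shows "z \<le> mkT m Q x y \<longleftrightarrow> Q x y z"
proof -
  let ?S = "{z. 1 \<le> z \<and> z \<le> m \<and> Q x y z}"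
  have ch: "z \<in> ?S \<longleftrightarrow> 1 \<le> z \<and> z \<le> card ?S"
  proof (rule down_card1)
    show "finite ?S" by (rule finite_subset[of _ "{..m}"]) auto
  next
    fix i j assume "j \<in> ?S" "1 \<le> i" "i \<le> j"
    then show "i \<in> ?S" using dz by auto
  qed auto
  show ?thesis using ch assms(2-7) by (simp add: mkT_def)
qed

lemma mkT_le: "mkT m Q x y \<le> m"
proof -
  have "card {z. 1 \<le> z \<and> z \<le> m \<and> Q x y z} \<le> card {1..m}" by (rule card_mono) auto
  then show ?thesis by (simp add: mkT_def)
qed

lemma mkT_tspp:
  assumes s1: "\<And>x y z. Q x y z \<Longrightarrow> Q y x z" and s2: "\<And>x y z. Q x y z \<Longrightarrow> Q x z y"
    and dn: "\<And>x y z x'. Q x y z \<Longrightarrow> 1 \<le> x' \<Longrightarrow> x' \<le> x \<Longrightarrow> Q x' y z"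
    and box: "\<And>x y z. Q x y z \<Longrightarrow> 1 \<le> x \<and> x \<le> m"
  shows "mkT m Q \<in> TSPP m"
    and "\<And>x y z. 1 \<le> x \<Longrightarrow> x \<le> m \<Longrightarrow> 1 \<le> y \<Longrightarrow> y \<le> m \<Longrightarrow> 1 \<le> z \<Longrightarrow> z \<le> m \<Longrightarrow>
            z \<le> mkT m Q x y \<longleftrightarrow> Q x y z"
proof -
  have dz: "\<And>x y z z'. Q x y z \<Longrightarrow> 1 \<le> z' \<Longrightarrow> z' \<le> z \<Longrightarrow> Q x y z'"
  proof -
    fix x y z z' assume q: "Q x y z" and "1 \<le> z'" "z' \<le> z"
    from q have "Q x z y" by (rule s2)
    then have "Q z x y" by (rule s1)
    then have "Q z' x y" using dn \<open>1 \<le> z'\<close> \<open>z' \<le> z\<close> by blast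
    then have "Q x z' y" by (rule s1)
    then show "Q x y z'" by (rule s2)
  qed
  have dy: "\<And>x y z y'. Q x y z \<Longrightarrow> 1 \<le> y' \<Longrightarrow> y' \<le> y \<Longrightarrow> Q x y' z"
  proof -
    fix x y z y' assume "Q x y z" "1 \<le> y'" "y' \<le> y"
    then have "Q y x z" using s1 by blast
    then have "Q y' x z" using dn \<open>1 \<le> y'\<close> \<open>y' \<le> y\<close> by blast
    then show "Q x y' z" using s1 by blast
  qed
  have ch: "z \<le> mkT m Q x y \<longleftrightarrow> Q x y z"
    if "1 \<le> x" "x \<le> m" "1 \<le> y" "y \<le> m" "1 \<le> z" "z \<le> m" for x y z
    by (rule mkT_char[where Q = Q]) (use dz that in blast)+
  show ch': "\<And>x y z. 1 \<le> x \<Longrightarrow> x \<le> m \<Longrightarrow> 1 \<le> y \<Longrightarrow> y \<le> m \<Longrightarrow> 1 \<le> z \<Longrightarrow> z \<le> m \<Longrightarrow>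
            z \<le> mkT m Q x y \<longleftrightarrow> Q x y z" by (rule ch)
  have boxall: "1 \<le> x \<and> x \<le> m \<and> 1 \<le> y \<and> y \<le> m \<and> 1 \<le> z \<and> z \<le> m" if q: "Q x y z" for x y z
  proof -
    have "Q y x z" using q by (rule s1)
    moreover have "Q z x y" using s1[OF s2[OF q]] .
    ultimately show ?thesis using box q by blast
  qed
  have cells: "\<And>x y z. (x, y, z) \<in> pp_cells m (mkT m Q) \<longleftrightarrow> Q x y z"
  proof -
    fix x y z
    show "(x, y, z) \<in> pp_cells m (mkT m Q) \<longleftrightarrow> Q x y z"
    proof
      assume "(x, y, z) \<in> pp_cells m (mkT m Q)"
      then have "1 \<le> x" "x \<le> m" "1 \<le> y" "y \<le> m" "1 \<le> z" "z \<le> mkT m Q x y"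
        by (auto simp: pp_cells_mem)
      moreover then have "z \<le> m" using mkT_le[of m Q x y] by simp
      ultimately show "Q x y z" using ch by blast
    next
      assume q: "Q x y z"
      then have b: "1 \<le> x" "x \<le> m" "1 \<le> y" "y \<le> m" "1 \<le> z" "z \<le> m" using boxall by auto
      then have "z \<le> mkT m Q x y" using ch q by blast
      then show "(x, y, z) \<in> pp_cells m (mkT m Q)" using b by (simp add: pp_cells_mem)
    qed
  qed
  have pp: "plane_partition_box m (mkT m Q)"
    unfolding plane_partition_box_def
  proof (intro conjI allI impI)
    fix i j assume h: "\<not> (1 \<le> i \<and> i \<le> m \<and> 1 \<le> j \<and> j \<le> m)"
    show "mkT m Q i j = 0" by (simp only: mkT_def if_not_P[OF h])
  next
    fix i j show "mkT m Q i j \<le> m" by (rule mkT_le)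
  next
    fix i j j' assume h: "1 \<le> i \<and> i \<le> m \<and> 1 \<le> j \<and> j \<le> j' \<and> j' \<le> m"
    have "{z. 1 \<le> z \<and> z \<le> m \<and> Q i j' z} \<subseteq> {z. 1 \<le> z \<and> z \<le> m \<and> Q i j z}"
      using dy h by auto
    then have "card {z. 1 \<le> z \<and> z \<le> m \<and> Q i j' z} \<le> card {z. 1 \<le> z \<and> z \<le> m \<and> Q i j z}"
      by (rule card_mono[rotated]) auto
    then show "mkT m Q i j' \<le> mkT m Q i j" using h by (simp add: mkT_def)
  next
    fix i i' j assume h: "1 \<le> i \<and> i \<le> i' \<and> i' \<le> m \<and> 1 \<le> j \<and> j \<le> m"
    have "{z. 1 \<le> z \<and> z \<le> m \<and> Q i' j z} \<subseteq> {z. 1 \<le> z \<and> z \<le> m \<and> Q i j z}"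
      using dn h by auto
    then have "card {z. 1 \<le> z \<and> z \<le> m \<and> Q i' j z} \<le> card {z. 1 \<le> z \<and> z \<le> m \<and> Q i j z}"
      by (rule card_mono[rotated]) auto
    then show "mkT m Q i' j \<le> mkT m Q i j" using h by (simp add: mkT_def)
  qed
  have "\<forall>\<sigma>\<in>coord_perms. \<sigma> ` pp_cells m (mkT m Q) = pp_cells m (mkT m Q)"
  proof (rule sym_W_perms)
    fix a b c assume "(a, b, c) \<in> pp_cells m (mkT m Q)"
    then have "Q a b c" using cells by blast
    then have "Q b a c" by (rule s1)
    then show "(b, a, c) \<in> pp_cells m (mkT m Q)" using cells by blast
  next
    fix a b c assume "(a, b, c) \<in> pp_cells m (mkT m Q)"
    then have "Q a b c" using cells by blast
    then have "Q a c b" by (rule s2)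
    then show "(a, c, b) \<in> pp_cells m (mkT m Q)" using cells by blast
  qed
  then show "mkT m Q \<in> TSPP m" using pp unfolding TSPP_def by simp
qed


definition min3 :: "nat \<Rightarrow> nat \<Rightarrow> nat \<Rightarrow> nat" where "min3 x y z = min x (min y z)"
definition max3 :: "nat \<Rightarrow> nat \<Rightarrow> nat \<Rightarrow> nat" where "max3 x y z = max x (max y z)"
definition med3 :: "nat \<Rightarrow> nat \<Rightarrow> nat \<Rightarrow> nat" where "med3 x y z = max (min x y) (min (max x y) z)"

lemma min3_sym: "min3 x y z = min3 y x z" "min3 x y z = min3 x z y"
  unfolding min3_def by (simp_all add: min_def)
lemma max3_sym: "max3 x y z = max3 y x z" "max3 x y z = max3 x z y"
  unfolding max3_def by (simp_all add: max_def)
lemma med3_sym: "med3 x y z = med3 y x z" "med3 x y z = med3 x z y"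
  unfolding med3_def by (simp_all add: min_def max_def)
lemma sort3: "i \<le> j \<Longrightarrow> j \<le> k \<Longrightarrow> min3 i j k = i \<and> med3 i j k = j \<and> max3 i j k = k"
  unfolding min3_def med3_def max3_def by (simp add: min_def max_def)
lemma ord3: "min3 x y z \<le> med3 x y z" "med3 x y z \<le> max3 x y z" "min3 x y z \<le> x" "x \<le> max3 x y z"
  unfolding min3_def med3_def max3_def by (simp_all add: min_def max_def)
lemma mono3: "x' \<le> x \<Longrightarrow> min3 x' y z \<le> min3 x y z \<and> med3 x' y z \<le> med3 x y z \<and> max3 x' y z \<le> max3 x y z"
  unfolding min3_def med3_def max3_def by (simp add: min_def max_def)

definition dpart :: "nat \<Rightarrow> (nat \<Rightarrow> nat \<Rightarrow> nat) \<Rightarrow> nat \<Rightarrow> nat" where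
  "dpart m T i = (if 1 \<le> i \<and> i \<le> m then T i i else 0)"

definition gT :: "(nat \<Rightarrow> nat \<Rightarrow> nat) \<Rightarrow> nat \<Rightarrow> nat \<Rightarrow> nat" where
  "gT T k y = T (Suc k) (Suc k + y) - k"


locale setup9 =
  fixes m :: nat and a b :: "nat list" and l :: nat
  assumes la: "length a = l" and lb: "length b = l" and sa: "sdec a" and sb: "sdec b"
    and ab: "\<And>k. k < l \<Longrightarrow> a ! k < b ! k"
    and bnd: "0 < l \<Longrightarrow> a ! 0 < m \<and> b ! 0 \<le> m"
begin

definition "b' = map (\<lambda>x. x - 1) b"
definition "d0 = from_frob b' a"
definition "D = conj_part d0"

lemma b1: "k < l \<Longrightarrow> 1 \<le> b ! k" using ab[of k] by simp
lemma lb': "length b' = l" unfolding b'_def using lb by simp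
lemma sb': "sdec b'" unfolding b'_def using sdec_map_pred[OF sb] b1 lb by simp
lemma b'_nth: "k < l \<Longrightarrow> b' ! k = b ! k - 1" unfolding b'_def using lb by simp

lemma d0_partb: "partb (l + (if l = 0 then 0 else a ! 0)) d0"
  unfolding d0_def using mu_partb[OF sb' sa lb' la] .

lemma d0_durfee: "durfee d0 = l"
  unfolding d0_def using mu_durfee[OF sb' sa lb' la] .

lemma d0_frob_b: "frob_b d0 = a"
  unfolding d0_def using mu_frob_b[OF sb' sa lb' la] .

lemma d0_le: "k < l \<Longrightarrow> d0 (Suc k) = b ! k + k"
  unfolding d0_def using mu_le[OF sb' sa lb' la, of "Suc k"] b'_nth[of k] b1[of k] by simp

lemma D_partb: "partb (d0 1) D" unfolding D_def by (rule conj_partb[OF d0_partb])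

lemma D_durfee: "durfee D = l" unfolding D_def using durfee_conj[OF d0_partb] d0_durfee by simp

lemma galoisD: "1 \<le> i \<Longrightarrow> 1 \<le> k \<Longrightarrow> k \<le> d0 i \<longleftrightarrow> i \<le> D k"
  unfolding D_def by (rule galois[OF d0_partb])

lemma D_char: "1 \<le> i \<Longrightarrow> i \<le> D i \<longleftrightarrow> i \<le> l"
  using durfee_char[OF D_partb, of i] D_durfee by simp

lemma D_mono: "1 \<le> i \<Longrightarrow> i \<le> j \<Longrightarrow> D j \<le> D i"
  using D_partb unfolding partb_def by blast

lemma d0_mono: "1 \<le> i \<Longrightarrow> i \<le> j \<Longrightarrow> d0 j \<le> d0 i"
  using d0_partb unfolding partb_def by blast

lemma d0_0: "d0 0 = 0" using d0_partb unfolding partb_def by blast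

lemma D_le: "k < l \<Longrightarrow> D (Suc k) = a ! k + Suc k"
proof -
  assume k: "k < l"
  have "Suc k \<le> D (Suc k)" using D_char[of "Suc k"] k by simp
  moreover have "a ! k = D (Suc k) - Suc k"
    using frob_b_nth[OF d0_partb, of k] d0_durfee d0_frob_b k unfolding D_def by simp
  ultimately show ?thesis by simp
qed

lemma l_le_m: "l \<le> m"
proof (cases "l = 0")
  case False
  then have "l \<le> D l" using D_char[of l] by simp
  also have "D l \<le> D 1" using D_mono[of 1 l] False by simp
  also have "D 1 = a ! 0 + 1" using D_le[of 0] False by simp
  also have "\<dots> \<le> m" using bnd False by simp
  finally show ?thesis .
qed simp

lemma D_bound: "D i \<le> m"
proof (cases "i = 0")
  case True then show ?thesis using D_partb unfolding partb_def by simp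
next
  case False
  have "D i \<le> D 1" using D_mono[of 1 i] False by simp
  also have "D 1 \<le> m"
  proof (cases "l = 0")
    case True
    then have "\<not> 1 \<le> D 1" using D_char[of 1] by simp
    then show ?thesis by simp
  next
    case l: False
    have "D 1 = a ! 0 + 1" using D_le[of 0] l by simp
    then show ?thesis using bnd l by simp
  qed
  finally show ?thesis .
qed

lemma d0_bound: "d0 i \<le> m"
proof (cases "i = 0")
  case True then show ?thesis using d0_0 by simp
next
  case False
  have "d0 i \<le> d0 1" using d0_mono[of 1 i] False by simp
  also have "d0 1 \<le> m"
  proof (cases "l = 0")
    case True
    then have "\<not> 1 \<le> d0 1" using durfee_char[OF d0_partb, of 1] d0_durfee by simp
    then show ?thesis by simp
  next
    case l: False
    have "d0 1 = b ! 0" using d0_le[of 0] l by simp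
    then show ?thesis using bnd l by simp
  qed
  finally show ?thesis .
qed


definition "ST = {T \<in> TSPP m. dpart m T = d0}"

lemma pp_row: "T \<in> TSPP m \<Longrightarrow> 1 \<le> i \<Longrightarrow> i \<le> m \<Longrightarrow> 1 \<le> j \<Longrightarrow> j \<le> j' \<Longrightarrow> j' \<le> m \<Longrightarrow> T i j' \<le> T i j"
  using tspp_pp[of T m] unfolding plane_partition_box_def by blast
lemma pp_col: "T \<in> TSPP m \<Longrightarrow> 1 \<le> i \<Longrightarrow> i \<le> i' \<Longrightarrow> i' \<le> m \<Longrightarrow> 1 \<le> j \<Longrightarrow> j \<le> m \<Longrightarrow> T i' j \<le> T i j"
  using tspp_pp[of T m] unfolding plane_partition_box_def by blast
lemma pp_le: "T \<in> TSPP m \<Longrightarrow> T i j \<le> m"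
  using tspp_pp[of T m] unfolding plane_partition_box_def by blast
lemma pp_out: "T \<in> TSPP m \<Longrightarrow> \<not> (1 \<le> i \<and> i \<le> m \<and> 1 \<le> j \<and> j \<le> m) \<Longrightarrow> T i j = 0"
  using tspp_pp[of T m] unfolding plane_partition_box_def by blast

lemma ST_diag: "T \<in> ST \<Longrightarrow> 1 \<le> i \<Longrightarrow> i \<le> m \<Longrightarrow> T i i = d0 i"
proof -
  assume T: "T \<in> ST" and i: "1 \<le> i" "i \<le> m"
  have "dpart m T i = d0 i" using T unfolding ST_def by simp
  then show ?thesis using i by (simp add: dpart_def)
qed

lemma ST_tspp: "T \<in> ST \<Longrightarrow> T \<in> TSPP m" unfolding ST_def by simp

lemma ST_row:
  assumes T: "T \<in> ST" and ij: "1 \<le> i" "i \<le> j" "j \<le> m"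
  shows "j \<le> T i j \<longleftrightarrow> j \<le> D i"
proof -
  have Tt: "T \<in> TSPP m" using ST_tspp[OF T] .
  have "j \<le> T i j \<longleftrightarrow> j \<le> T j i" using tspp_sym[OF Tt, of i j] by simp
  also have "\<dots> \<longleftrightarrow> i \<le> T j j" using tspp_mem23[OF Tt, of j i j] ij by simp
  also have "\<dots> \<longleftrightarrow> i \<le> d0 j" using ST_diag[OF T, of j] ij by simp
  also have "\<dots> \<longleftrightarrow> j \<le> D i" using galoisD[of j i] ij by simp
  finally show ?thesis .
qed

lemma ST_det:
  assumes T: "T \<in> ST" and T': "T' \<in> ST"
    and eq: "\<And>i j. 1 \<le> i \<Longrightarrow> i \<le> j \<Longrightarrow> j \<le> D i \<Longrightarrow> T i j = T' i j"
  shows "T = T'"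
proof -
  have Tt: "T \<in> TSPP m" using ST_tspp[OF T] .
  have Tt': "T' \<in> TSPP m" using ST_tspp[OF T'] .
  let ?R = "\<lambda>x y z. 1 \<le> x \<and> x \<le> m \<and> 1 \<le> y \<and> y \<le> m \<and> 1 \<le> z \<and> z \<le> m \<longrightarrow> (z \<le> T x y \<longleftrightarrow> z \<le> T' x y)"
  have R: "?R x y z" for x y z
  proof (rule sym_sorted[of ?R])
    fix x y z assume r: "?R x y z"
    have e1: "T y x = T x y" "T' y x = T' x y" using tspp_sym[OF Tt, of x y] tspp_sym[OF Tt', of x y] by simp_all
    show "?R y x z" unfolding e1 using r by blast
  next
    fix x y z assume r: "?R x y z"
    show "?R x z y"
    proof
      assume b: "1 \<le> x \<and> x \<le> m \<and> 1 \<le> z \<and> z \<le> m \<and> 1 \<le> y \<and> y \<le> m"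
      have "y \<le> T x z \<longleftrightarrow> z \<le> T x y" using tspp_mem23[OF Tt, of x y z] b by simp
      also have "\<dots> \<longleftrightarrow> z \<le> T' x y" using r b by simp
      also have "\<dots> \<longleftrightarrow> y \<le> T' x z" using tspp_mem23[OF Tt', of x y z] b by simp
      finally show "y \<le> T x z \<longleftrightarrow> y \<le> T' x z" .
    qed
  next
    fix i j k :: nat assume ij: "i \<le> j" "j \<le> k"
    show "?R i j k"
    proof
      assume b: "1 \<le> i \<and> i \<le> m \<and> 1 \<le> j \<and> j \<le> m \<and> 1 \<le> k \<and> k \<le> m"
      show "k \<le> T i j \<longleftrightarrow> k \<le> T' i j"
      proof (cases "j \<le> D i")
        case True then show ?thesis using eq[of i j] b ij by simp
      next
        case False
        have "\<not> j \<le> T i j" using ST_row[OF T, of i j] False b ij by simp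
        moreover have "\<not> j \<le> T' i j" using ST_row[OF T', of i j] False b ij by simp
        ultimately show ?thesis using ij by simp
      qed
    qed
  qed
  show "T = T'"
  proof (intro ext)
    fix x y
    show "T x y = T' x y"
    proof (cases "1 \<le> x \<and> x \<le> m \<and> 1 \<le> y \<and> y \<le> m")
      case False then show ?thesis using pp_out[OF Tt] pp_out[OF Tt'] by simp
    next
      case True
      show ?thesis
      proof (rule eq_by_le1)
        fix z :: nat assume z: "1 \<le> z"
        show "z \<le> T x y \<longleftrightarrow> z \<le> T' x y"
        proof (cases "z \<le> m")
          case True then show ?thesis using R[of x y z] \<open>1 \<le> x \<and> x \<le> m \<and> 1 \<le> y \<and> y \<le> m\<close> z by simp
        next
          case False then show ?thesis using pp_le[OF Tt, of x y] pp_le[OF Tt', of x y] by simp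
        qed
      qed
    qed
  qed
qed


lemma a_dec: "i < j \<Longrightarrow> j < l \<Longrightarrow> a ! j < a ! i" using sa la unfolding sdec_def by blast
lemma b_dec: "i < j \<Longrightarrow> j < l \<Longrightarrow> b ! j < b ! i" using sb lb unfolding sdec_def by blast

definition "NIset = lgv.NI gstep l (\<lambda>i. (1, b ! i)) (\<lambda>j. (Suc (a ! j), Suc (a ! j))) id"

definition "Phi T = restrict (fpath ((!) a) ((!) b) (gT T)) {..<l}"

lemma kl_m: "k < l \<Longrightarrow> Suc k \<le> m" using l_le_m by simp

lemma Dk_m: "k < l \<Longrightarrow> a ! k + Suc k \<le> m" using D_bound[of "Suc k"] D_le[of k] by simp

lemma ST_Ddiag: "T \<in> ST \<Longrightarrow> k < l \<Longrightarrow> a ! k + Suc k \<le> T (Suc k) (a ! k + Suc k)"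
  using ST_row[of T "Suc k" "a ! k + Suc k"] D_le[of k] Dk_m[of k] by simp

lemma ST_lower: "T \<in> ST \<Longrightarrow> k < l \<Longrightarrow> y \<le> a ! k \<Longrightarrow> a ! k + Suc k \<le> T (Suc k) (Suc k + y)"
proof -
  assume T: "T \<in> ST" and k: "k < l" and y: "y \<le> a ! k"
  have "T (Suc k) (a ! k + Suc k) \<le> T (Suc k) (Suc k + y)"
    using pp_row[OF ST_tspp[OF T], of "Suc k" "Suc k + y" "a ! k + Suc k"] y kl_m[OF k] Dk_m[OF k] by simp
  then show ?thesis using ST_Ddiag[OF T k] by simp
qed

lemma ST_upper: "T \<in> ST \<Longrightarrow> k < l \<Longrightarrow> y \<le> a ! k \<Longrightarrow> T (Suc k) (Suc k + y) \<le> b ! k + k"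
proof -
  assume T: "T \<in> ST" and k: "k < l" and y: "y \<le> a ! k"
  have "T (Suc k) (Suc k + y) \<le> T (Suc k) (Suc k)"
    using pp_row[OF ST_tspp[OF T], of "Suc k" "Suc k" "Suc k + y"] y kl_m[OF k] Dk_m[OF k] by simp
  then show ?thesis using ST_diag[OF T, of "Suc k"] kl_m[OF k] d0_le[OF k] by simp
qed

lemma Phi_valid: "T \<in> ST \<Longrightarrow> k < l \<Longrightarrow> gvalid 1 (a ! k) (b ! k) (Suc (a ! k)) (gT T k)"
  unfolding gvalid_def
proof (intro conjI allI impI)
  assume T: "T \<in> ST" and k: "k < l"
  show "Suc (a ! k) \<le> b ! k" using ab[OF k] by simp
  fix y assume y: "1 \<le> y \<and> y < 1 + a ! k"
  show "Suc (a ! k) \<le> gT T k y" using ST_lower[OF T k, of y] y by (simp add: gT_def)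
  show "gT T k y \<le> b ! k" using ST_upper[OF T k, of y] y by (simp add: gT_def)
next
  fix y y' assume T: "T \<in> ST" and k: "k < l" and yy: "1 \<le> y \<and> y \<le> y' \<and> y' < 1 + a ! k"
  have "T (Suc k) (Suc k + y') \<le> T (Suc k) (Suc k + y)"
    using pp_row[OF ST_tspp[OF T], of "Suc k" "Suc k + y" "Suc k + y'"] yy kl_m[OF k] Dk_m[OF k] by simp
  then show "gT T k y' \<le> gT T k y" by (simp add: gT_def)
qed

lemma GG_gT: "T \<in> ST \<Longrightarrow> k < l \<Longrightarrow> p \<le> a ! k \<Longrightarrow> GG ((!) a) ((!) b) (gT T) k p = T (Suc k) (Suc k + p) - k"
proof -
  assume T: "T \<in> ST" and k: "k < l" and p: "p \<le> a ! k"
  show ?thesis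
  proof (cases "p = 0")
    case True
    then show ?thesis using ST_diag[OF T, of "Suc k"] kl_m[OF k] d0_le[OF k] by (simp add: GG_def)
  next
    case False then show ?thesis using p by (simp add: GG_def gT_def)
  qed
qed

lemma Phi_interlace:
  assumes T: "T \<in> ST" and k: "Suc k < l" and p: "1 \<le> p" "p \<le> Suc (a ! Suc k)"
  shows "GG ((!) a) ((!) b) (gT T) (Suc k) (p - 1) < GG ((!) a) ((!) b) (gT T) k p"
proof -
  have k0: "k < l" using k by simp
  have aa: "a ! Suc k < a ! k" using a_dec[of k "Suc k"] k by simp
  have pk: "p \<le> a ! k" using p aa by simp
  have e1: "GG ((!) a) ((!) b) (gT T) k p = T (Suc k) (Suc k + p) - k" using GG_gT[OF T k0 pk] .
  have e2: "GG ((!) a) ((!) b) (gT T) (Suc k) (p - 1) = T (Suc (Suc k)) (Suc (Suc k) + (p - 1)) - Suc k"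
    using GG_gT[OF T k, of "p - 1"] p by simp
  have idx: "Suc (Suc k) + (p - 1) = Suc k + p" using p by simp
  have col: "T (Suc (Suc k)) (Suc k + p) \<le> T (Suc k) (Suc k + p)"
    using pp_col[OF ST_tspp[OF T], of "Suc k" "Suc (Suc k)" "Suc k + p"] kl_m[OF k] Dk_m[OF k] p by simp
  have low: "a ! Suc k + Suc (Suc k) \<le> T (Suc (Suc k)) (Suc (Suc k) + (p - 1))"
    using ST_lower[OF T k, of "p - 1"] p by simp
  show ?thesis unfolding e1 e2 idx using col low idx p by simp
qed

lemma Phi_NI: "T \<in> ST \<Longrightarrow> Phi T \<in> NIset"
proof -
  assume T: "T \<in> ST"
  have paths: "Phi T k \<in> paths gstep (1, b ! k) (Suc (a ! k), Suc (a ! k))" if "k < l" for k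
    using mkp_path[OF Phi_valid[OF T that]] that unfolding Phi_def fpath_def by simp
  have dis: "set (fpath ((!) a) ((!) b) (gT T) i) \<inter> set (fpath ((!) a) ((!) b) (gT T) j) = {}"
    if "i < l" "j < l" "i \<noteq> j" for i j
  proof (rule NI_from_interlace[where l = l])
    show "\<And>k. k < l \<Longrightarrow> gvalid 1 (a ! k) (b ! k) (Suc (a ! k)) (gT T k)" using Phi_valid[OF T] by blast
    show "\<And>i k. i < k \<Longrightarrow> k < l \<Longrightarrow> a ! k < a ! i" using a_dec by blast
    show "\<And>k p. Suc k < l \<Longrightarrow> 1 \<le> p \<Longrightarrow> p \<le> Suc (a ! Suc k) \<Longrightarrow>
       GG ((!) a) ((!) b) (gT T) (Suc k) (p - 1) < GG ((!) a) ((!) b) (gT T) k p"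
      using Phi_interlace[OF T] by blast
  qed (use that in auto)
  show ?thesis
    unfolding NIset_def lgv.NI_def[OF lgv_grid] lgv.Fam_def[OF lgv_grid]
  proof (intro CollectI conjI allI impI)
    show "Phi T \<in> (\<Pi>\<^sub>E i\<in>{..<l}. paths gstep (1, b ! i) (Suc (a ! id i), Suc (a ! id i)))"
      using paths unfolding Phi_def by (auto simp: PiE_iff)
    fix i j assume "i < l" "j < l" "i \<noteq> j"
    then show "set (Phi T i) \<inter> set (Phi T j) = {}" using dis unfolding Phi_def by simp
  qed
qed


lemma Phi_inj: "inj_on Phi ST"
proof (rule inj_onI)
  fix T T' assume T: "T \<in> ST" and T': "T' \<in> ST" and eq: "Phi T = Phi T'"
  have row: "T (Suc k) (Suc k + y) = T' (Suc k) (Suc k + y)" if k: "k < l" and y: "1 \<le> y" "y \<le> a ! k" for k y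
  proof -
    have "fpath ((!) a) ((!) b) (gT T) k = fpath ((!) a) ((!) b) (gT T') k"
      using fun_cong[OF eq, of k] k unfolding Phi_def by simp
    then have "gT T k y = gT T' k y"
      using mkp_inj[OF Phi_valid[OF T k] Phi_valid[OF T' k], of y] y unfolding fpath_def by simp
    moreover have "k < T (Suc k) (Suc k + y)" using ST_lower[OF T k y(2)] by simp
    moreover have "k < T' (Suc k) (Suc k + y)" using ST_lower[OF T' k y(2)] by simp
    ultimately show ?thesis unfolding gT_def by simp
  qed
  show "T = T'"
  proof (rule ST_det[OF T T'])
    fix i j assume ij: "1 \<le> i" "i \<le> j" "j \<le> D i"
    have il: "i \<le> l" using D_char[of i] ij by simp
    define k where "k = i - 1"
    have k: "k < l" "i = Suc k" using il ij by (auto simp: k_def)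
    have Di: "D i = a ! k + Suc k" using D_le[OF k(1)] k(2) by simp
    show "T i j = T' i j"
    proof (cases "j = i")
      case True
      then show ?thesis using ST_diag[OF T, of i] ST_diag[OF T', of i] ij kl_m[OF k(1)] k(2) by simp
    next
      case False
      then have "1 \<le> j - i" "j - i \<le> a ! k" using ij Di k(2) by auto
      then show ?thesis using row[OF k(1), of "j - i"] ij k(2) by simp
    qed
  qed
qed

end


locale surj9 = setup9 +
  fixes gk :: "nat \<Rightarrow> nat \<Rightarrow> nat"
  assumes gv: "\<And>k. k < l \<Longrightarrow> gvalid 1 (a ! k) (b ! k) (Suc (a ! k)) (gk k)"
    and il: "\<And>k p. Suc k < l \<Longrightarrow> 1 \<le> p \<Longrightarrow> p \<le> Suc (a ! Suc k) \<Longrightarrow>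
               GG ((!) a) ((!) b) gk (Suc k) (p - 1) < GG ((!) a) ((!) b) gk k p"
begin

abbreviation "GK \<equiv> GG ((!) a) ((!) b) gk"

definition "V i j = GK (i - 1) (j - i) + (i - 1)"

lemma dom_l: "1 \<le> i \<Longrightarrow> i \<le> j \<Longrightarrow> j \<le> D i \<Longrightarrow> i \<le> l"
  using D_char[of i] by simp

lemma dom_k: "1 \<le> i \<Longrightarrow> i \<le> j \<Longrightarrow> j \<le> D i \<Longrightarrow> i - 1 < l \<and> D i = a ! (i - 1) + i \<and> j - i \<le> a ! (i - 1)"
proof -
  assume h: "1 \<le> i" "i \<le> j" "j \<le> D i"
  have il: "i \<le> l" using dom_l[OF h] .
  then have e: "D i = a ! (i - 1) + i" using D_le[of "i - 1"] h by simp
  show ?thesis using h il e by (intro conjI) linarith+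
qed

lemma V1: "1 \<le> i \<Longrightarrow> i \<le> j \<Longrightarrow> j \<le> j' \<Longrightarrow> j' \<le> D i \<Longrightarrow> V i j' \<le> V i j"
proof -
  assume h: "1 \<le> i" "i \<le> j" "j \<le> j'" "j' \<le> D i"
  from dom_k[of i j'] h have k: "i - 1 < l" "j' - i \<le> a ! (i - 1)" by auto
  have "GK (i - 1) (j' - i) \<le> GK (i - 1) (j - i)"
    using GG_mono2[where r="(!) a" and t="(!) b" and gk=gk, OF gv[OF k(1)], of "j - i" "j' - i"] h k by simp
  then show ?thesis unfolding V_def by simp
qed

lemma V2s: "1 \<le> i \<Longrightarrow> Suc i \<le> j \<Longrightarrow> j \<le> D (Suc i) \<Longrightarrow> V (Suc i) j \<le> V i j"
proof -
  assume h: "1 \<le> i" "Suc i \<le> j" "j \<le> D (Suc i)"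
  from dom_k[of "Suc i" j] h have k: "i < l" "D (Suc i) = a ! i + Suc i" by auto
  have "Suc i \<le> l" using dom_l[of "Suc i" j] h by simp
  then have kk: "Suc (i - 1) < l" using h by simp
  have "GK (Suc (i - 1)) (j - i - 1) < GK (i - 1) (j - i)"
    using il[OF kk, of "j - i"] h k by simp
  moreover have "Suc (i - 1) = i" using h by simp
  ultimately have "GK i (j - Suc i) < GK (i - 1) (j - i)" by simp
  then show ?thesis unfolding V_def using h by simp
qed

lemma V2: "1 \<le> i' \<Longrightarrow> i' \<le> i \<Longrightarrow> i \<le> j \<Longrightarrow> j \<le> D i \<Longrightarrow> V i j \<le> V i' j"
proof -
  assume h: "1 \<le> i'" "i' \<le> i" "i \<le> j" "j \<le> D i"
  have "i \<le> j \<longrightarrow> j \<le> D i \<longrightarrow> V i j \<le> V i' j"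
    using h(2)
  proof (induction i rule: dec_induct)
    case base then show ?case by simp
  next
    case (step n)
    show ?case
    proof (intro impI)
      assume a1: "Suc n \<le> j" "j \<le> D (Suc n)"
      have "D (Suc n) \<le> D n" using D_mono[of n "Suc n"] step h by simp
      then have "V n j \<le> V i' j" using step a1 by simp
      moreover have "V (Suc n) j \<le> V n j" using V2s[of n j] a1 step h by simp
      ultimately show "V (Suc n) j \<le> V i' j" by simp
    qed
  qed
  then show ?thesis using h by simp
qed

lemma V3: "1 \<le> i \<Longrightarrow> i \<le> j \<Longrightarrow> j \<le> D i \<Longrightarrow> D i \<le> V i j"
proof -
  assume h: "1 \<le> i" "i \<le> j" "j \<le> D i"
  from dom_k[OF h] have k: "i - 1 < l" "D i = a ! (i - 1) + i" by auto
  have "GK (i - 1) (Suc (a ! (i - 1))) \<le> GK (i - 1) (a ! (i - 1))"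
    using GG_mono2[where r="(!) a" and t="(!) b" and gk=gk, OF gv[OF k(1)], of "a ! (i - 1)" "Suc (a ! (i - 1))"] by simp
  moreover have "GK (i - 1) (Suc (a ! (i - 1))) = Suc (a ! (i - 1))" by (simp add: GG_def)
  ultimately have "D i \<le> V i (D i)" unfolding V_def using k h by simp linarith
  moreover have "V i (D i) \<le> V i j" using V1[of i j "D i"] h by simp
  ultimately show ?thesis by simp
qed

lemma V4: "1 \<le> i \<Longrightarrow> i \<le> l \<Longrightarrow> V i i = d0 i"
proof -
  assume h: "1 \<le> i" "i \<le> l"
  have "d0 i = b ! (i - 1) + (i - 1)" using d0_le[of "i - 1"] h by simp
  then show ?thesis unfolding V_def by (simp add: GG_def)
qed

lemma V5: "1 \<le> i \<Longrightarrow> i \<le> j \<Longrightarrow> j \<le> D i \<Longrightarrow> V i j \<le> m"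
proof -
  assume h: "1 \<le> i" "i \<le> j" "j \<le> D i"
  have "V i j \<le> V i i" using V1[of i i j] h by simp
  also have "\<dots> = d0 i" using V4[of i] dom_l[OF h] h by simp
  also have "\<dots> \<le> m" by (rule d0_bound)
  finally show ?thesis .
qed

definition "P3 i j k \<longleftrightarrow> 1 \<le> i \<and> i \<le> j \<and> j \<le> k \<and> k \<le> m \<and> j \<le> D i \<and> k \<le> V i j"
definition "Q x y z \<longleftrightarrow> P3 (min3 x y z) (med3 x y z) (max3 x y z)"

lemma Q_s1: "Q x y z \<longleftrightarrow> Q y x z"
  unfolding Q_def using min3_sym(1)[of x y z] med3_sym(1)[of x y z] max3_sym(1)[of x y z] by simp
lemma Q_s2: "Q x y z \<longleftrightarrow> Q x z y"
  unfolding Q_def using min3_sym(2)[of x y z] med3_sym(2)[of x y z] max3_sym(2)[of x y z] by simp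
lemma Q_sorted: "i \<le> j \<Longrightarrow> j \<le> k \<Longrightarrow> Q i j k \<longleftrightarrow> P3 i j k"
  unfolding Q_def using sort3[of i j k] by simp

lemma P3_down:
  assumes p: "P3 i j k" and le: "i' \<le> i" "j' \<le> j" "k' \<le> k" and s: "1 \<le> i'" "i' \<le> j'" "j' \<le> k'"
  shows "P3 i' j' k'"
proof -
  from p have p': "1 \<le> i" "i \<le> j" "j \<le> k" "k \<le> m" "j \<le> D i" "k \<le> V i j" unfolding P3_def by auto
  have "D i \<le> D i'" using D_mono[of i' i] s le by simp
  then have jD: "j \<le> D i'" using p' by simp
  have "V i j \<le> V i' j" using V2[of i' i j] s le p' by simp
  moreover have "V i' j \<le> V i' j'" using V1[of i' j' j] s le jD by simp
  ultimately show ?thesis using p' le s jD unfolding P3_def by simp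
qed

lemma Q_down: "Q x y z \<Longrightarrow> 1 \<le> x' \<Longrightarrow> x' \<le> x \<Longrightarrow> Q x' y z"
proof -
  assume q: "Q x y z" and x': "1 \<le> x'" "x' \<le> x"
  have p: "P3 (min3 x y z) (med3 x y z) (max3 x y z)" using q unfolding Q_def .
  have m1: "1 \<le> min3 x y z" using p unfolding P3_def by simp
  then have "1 \<le> y" "1 \<le> z" unfolding min3_def by simp_all
  then have "1 \<le> min3 x' y z" using x' unfolding min3_def by simp
  then show "Q x' y z" unfolding Q_def
    using P3_down[OF p] mono3[OF x'(2), of y z] ord3[of x' y z] by simp
qed

lemma Q_box: "Q x y z \<Longrightarrow> 1 \<le> x \<and> x \<le> m"
proof -
  assume q: "Q x y z"
  have p: "P3 (min3 x y z) (med3 x y z) (max3 x y z)" using q unfolding Q_def .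
  then have "1 \<le> min3 x y z" "max3 x y z \<le> m" unfolding P3_def by auto
  then show ?thesis using ord3(3,4)[of x y z] by simp
qed

definition "TT = mkT m Q"

lemma TT_tspp: "TT \<in> TSPP m"
  unfolding TT_def
  by (rule mkT_tspp(1)) (use Q_s1 Q_s2 Q_down Q_box in blast)+

lemma TT_char: "1 \<le> x \<Longrightarrow> x \<le> m \<Longrightarrow> 1 \<le> y \<Longrightarrow> y \<le> m \<Longrightarrow> 1 \<le> z \<Longrightarrow> z \<le> m \<Longrightarrow> z \<le> TT x y \<longleftrightarrow> Q x y z"
  unfolding TT_def
  by (rule mkT_tspp(2)) (use Q_s1 Q_s2 Q_down Q_box in blast)+


lemma TT_le: "TT x y \<le> m" unfolding TT_def by (rule mkT_le)

lemma TT_diag: "1 \<le> t \<Longrightarrow> t \<le> m \<Longrightarrow> TT t t = d0 t"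
proof -
  assume t: "1 \<le> t" "t \<le> m"
  show ?thesis
  proof (rule eq_by_le1)
    fix z :: nat assume z: "1 \<le> z"
    show "z \<le> TT t t \<longleftrightarrow> z \<le> d0 t"
    proof (cases "z \<le> m")
      case False then show ?thesis using TT_le[of t t] d0_bound[of t] by simp
    next
      case zm: True
      have "z \<le> TT t t \<longleftrightarrow> Q t t z" using TT_char[of t t z] t z zm by simp
      also have "\<dots> \<longleftrightarrow> t \<le> D z"
      proof (cases "z \<le> t")
        case True
        have "Q t t z \<longleftrightarrow> Q z t t" using Q_s1[of t z t] Q_s2[of t t z] by simp
        also have "\<dots> \<longleftrightarrow> P3 z t t" using Q_sorted[of z t t] True by simp
        also have "\<dots> \<longleftrightarrow> t \<le> D z"
        proof
          assume "P3 z t t" then show "t \<le> D z" unfolding P3_def by simp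
        next
          assume tD: "t \<le> D z"
          have "D z \<le> V z t" using V3[of z t] z True tD by simp
          then show "P3 z t t" unfolding P3_def using z True tD t by simp
        qed
        finally show ?thesis .
      next
        case False
        have "Q t t z \<longleftrightarrow> P3 t t z" using Q_sorted[of t t z] False by simp
        also have "\<dots> \<longleftrightarrow> t \<le> l \<and> z \<le> d0 t"
        proof (cases "t \<le> l")
          case True
          have "t \<le> D t" using D_char[of t] t True by simp
          then show ?thesis using V4[of t] True t zm False unfolding P3_def by auto
        next
          case False
          have "\<not> t \<le> D t" using D_char[of t] t False by simp
          then show ?thesis using False unfolding P3_def by simp
        qed
        also have "\<dots> \<longleftrightarrow> t \<le> D z"
        proof (cases "t \<le> l")
          case True then show ?thesis using galoisD[of t z] t z by simp
        next
          case tl: False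
          have "\<not> t \<le> D t" using D_char[of t] t tl by simp
          moreover have "D z \<le> D t" using D_mono[of t z] t False by simp
          ultimately show ?thesis using tl by simp
        qed
        finally show ?thesis .
      qed
      also have "\<dots> \<longleftrightarrow> z \<le> d0 t" using galoisD[of t z] t z by simp
      finally show ?thesis .
    qed
  qed
qed

lemma d0_out: "\<not> (1 \<le> t \<and> t \<le> m) \<Longrightarrow> d0 t = 0"
proof -
  assume h: "\<not> (1 \<le> t \<and> t \<le> m)"
  show ?thesis
  proof (cases "t = 0")
    case True then show ?thesis using d0_0 by simp
  next
    case False
    then have tm: "m < t" using h by simp
    show ?thesis
    proof (rule ccontr)
      assume "d0 t \<noteq> 0"
      then have "1 \<le> d0 t" by simp
      then have "t \<le> D 1" using galoisD[of t 1] False by simp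
      then show False using D_bound[of 1] tm by simp
    qed
  qed
qed

lemma TT_ST: "TT \<in> ST"
proof -
  have "dpart m TT = d0"
  proof
    fix t show "dpart m TT t = d0 t"
      using TT_diag[of t] d0_out[of t] by (auto simp: dpart_def)
  qed
  then show ?thesis unfolding ST_def using TT_tspp by simp
qed

lemma TT_V: "1 \<le> i \<Longrightarrow> i \<le> j \<Longrightarrow> j \<le> D i \<Longrightarrow> TT i j = V i j"
proof -
  assume h: "1 \<le> i" "i \<le> j" "j \<le> D i"
  have jm: "j \<le> m" using h D_bound[of i] by simp
  have Vj: "j \<le> V i j" using V3[OF h] h by simp
  show ?thesis
  proof (rule eq_by_le1)
    fix z :: nat assume z: "1 \<le> z"
    show "z \<le> TT i j \<longleftrightarrow> z \<le> V i j"
    proof (cases "z \<le> m")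
      case False then show ?thesis using TT_le[of i j] V5[OF h] by simp
    next
      case zm: True
      have "z \<le> TT i j \<longleftrightarrow> Q i j z" using TT_char[of i j z] h jm z zm by simp
      also have "\<dots> \<longleftrightarrow> z \<le> V i j"
      proof (cases "j \<le> z")
        case True
        then show ?thesis using Q_sorted[of i j z] h zm unfolding P3_def by auto
      next
        case F1: False
        have zV: "z \<le> V i j" using F1 Vj by simp
        show ?thesis
        proof (cases "i \<le> z")
          case True
          have "Q i j z \<longleftrightarrow> P3 i z j" using Q_s2[of i j z] Q_sorted[of i z j] True F1 by simp
          moreover have "P3 i z j"
          proof -
            have "V i j \<le> V i z" using V1[of i z j] h True F1 by simp
            then show ?thesis unfolding P3_def using h True F1 jm Vj by simp
          qed
          ultimately show ?thesis using zV by simp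
        next
          case False
          have "Q i j z \<longleftrightarrow> Q z i j" using Q_s1[of i z j] Q_s2[of i j z] by simp
          also have "\<dots> \<longleftrightarrow> P3 z i j" using Q_sorted[of z i j] False h by simp
          finally have e: "Q i j z \<longleftrightarrow> P3 z i j" .
          have Dz: "D i \<le> D z" using D_mono[of z i] z False by simp
          have "P3 z i j"
          proof -
            have "V i j \<le> V z j" using V2[of z i j] z False h by simp
            moreover have "V z j \<le> V z i" using V1[of z i j] z False h Dz by simp
            ultimately show ?thesis unfolding P3_def using z False h jm Dz Vj by simp
          qed
          then show ?thesis using e zV by simp
        qed
      qed
      finally show ?thesis .
    qed
  qed
qed

lemma TT_gT: "k < l \<Longrightarrow> 1 \<le> y \<Longrightarrow> y \<le> a ! k \<Longrightarrow> gT TT k y = gk k y"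
proof -
  assume h: "k < l" "1 \<le> y" "y \<le> a ! k"
  have D: "D (Suc k) = a ! k + Suc k" using D_le[OF h(1)] .
  have "TT (Suc k) (Suc k + y) = V (Suc k) (Suc k + y)" using TT_V[of "Suc k" "Suc k + y"] D h by simp
  also have "\<dots> = GK k y + k" unfolding V_def by simp
  also have "GK k y = gk k y" using h by (simp add: GG_def)
  finally show ?thesis unfolding gT_def by simp
qed

end


context setup9
begin

lemma Phi_surj:
  assumes P: "P \<in> NIset"
  shows "\<exists>T\<in>ST. Phi T = P"
proof -
  have Pf: "P \<in> (\<Pi>\<^sub>E i\<in>{..<l}. paths gstep (1, b ! i) (Suc (a ! i), Suc (a ! i)))"
    and Pd: "\<And>i j. i < l \<Longrightarrow> j < l \<Longrightarrow> i \<noteq> j \<Longrightarrow> set (P i) \<inter> set (P j) = {}"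
    using P unfolding NIset_def lgv.NI_def[OF lgv_grid] lgv.Fam_def[OF lgv_grid] by auto
  have "\<forall>k. \<exists>g. k < l \<longrightarrow> gvalid 1 (a ! k) (b ! k) (Suc (a ! k)) g \<and> P k = mkp 1 (a ! k) (b ! k) (Suc (a ! k)) g"
  proof
    fix k
    show "\<exists>g. k < l \<longrightarrow> gvalid 1 (a ! k) (b ! k) (Suc (a ! k)) g \<and> P k = mkp 1 (a ! k) (b ! k) (Suc (a ! k)) g"
    proof (cases "k < l")
      case True
      then have "P k \<in> paths gstep (1, b ! k) (Suc (a ! k), Suc (a ! k))" using Pf by auto
      from gpath_mkp[OF this] show ?thesis by auto
    qed simp
  qed
  from choice[OF this] obtain gk where
    gk: "\<And>k. k < l \<Longrightarrow> gvalid 1 (a ! k) (b ! k) (Suc (a ! k)) (gk k) \<and> P k = mkp 1 (a ! k) (b ! k) (Suc (a ! k)) (gk k)"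
    by blast
  have fp: "\<And>k. k < l \<Longrightarrow> fpath ((!) a) ((!) b) gk k = P k" using gk unfolding fpath_def by simp
  have ilv: "GG ((!) a) ((!) b) gk (Suc k) (p - 1) < GG ((!) a) ((!) b) gk k p"
    if "Suc k < l" "1 \<le> p" "p \<le> Suc (a ! Suc k)" for k p
  proof (rule interlace_from_NI[where l = l, OF _ _ _ _ that(1)])
    show "\<And>k. k < l \<Longrightarrow> gvalid 1 (a ! k) (b ! k) (Suc (a ! k)) (gk k)" using gk by blast
    show "\<And>k. Suc k < l \<Longrightarrow> a ! Suc k < a ! k" using a_dec by simp
    show "\<And>k. Suc k < l \<Longrightarrow> b ! Suc k < b ! k" using b_dec by simp
    show "\<And>k. Suc k < l \<Longrightarrow> set (fpath ((!) a) ((!) b) gk k) \<inter> set (fpath ((!) a) ((!) b) gk (Suc k)) = {}"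
      using fp Pd by simp
  qed (use that in auto)
  interpret S: surj9 m a b l gk
    by (intro surj9.intro surj9_axioms.intro setup9_axioms) (use gk ilv in auto)
  have "Phi S.TT = P"
  proof
    fix k
    show "Phi S.TT k = P k"
    proof (cases "k < l")
      case True
      have "mkp 1 (a ! k) (b ! k) (Suc (a ! k)) (gT S.TT k) = mkp 1 (a ! k) (b ! k) (Suc (a ! k)) (gk k)"
        by (rule mkp_cong) (use S.TT_gT True in simp)
      then show ?thesis using gk[OF True] True unfolding Phi_def fpath_def by simp
    next
      case False
      then show ?thesis using Pf unfolding Phi_def by (auto simp: PiE_def extensional_def)
    qed
  qed
  then show ?thesis using S.TT_ST by blast
qed

lemma Phi_bij: "bij_betw Phi ST NIset"
proof (rule bij_betw_imageI)
  show "inj_on Phi ST" by (rule Phi_inj)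
  show "Phi ` ST = NIset" using Phi_NI Phi_surj by blast
qed

lemma count_ST: "int (card ST) = det (mat l l (\<lambda>(i, j). int ((b ! j - 1) choose (a ! i))))"
proof -
  have "card ST = card NIset" using bij_betw_same_card[OF Phi_bij] .
  moreover have "det (mat l l (\<lambda>(i, j). int (card (paths gstep ((\<lambda>i. (1, b ! i)) j) ((\<lambda>j. (Suc (a ! j), Suc (a ! j))) i))))) =
      int (card NIset)"
    unfolding NIset_def
  proof (rule lgv.lgv_det_id[OF lgv_grid])
    fix \<sigma> assume "\<sigma> permutes {..<l}" "\<sigma> \<noteq> id"
    then show "lgv.NI gstep l (\<lambda>i. (1, b ! i)) (\<lambda>j. (Suc (a ! j), Suc (a ! j))) \<sigma> = {}"
      by (intro grid_NI_empty) (auto intro: a_dec b_dec)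
  qed
  moreover have "mat l l (\<lambda>(i, j). int (card (paths gstep ((\<lambda>i. (1, b ! i)) j) ((\<lambda>j. (Suc (a ! j), Suc (a ! j))) i)))) =
      mat l l (\<lambda>(i, j). int ((b ! j - 1) choose (a ! i)))"
  proof (rule eq_matI)
    fix i j assume ij: "i < dim_row (mat l l (\<lambda>(i, j). int ((b ! j - 1) choose (a ! i))))"
      "j < dim_col (mat l l (\<lambda>(i, j). int ((b ! j - 1) choose (a ! i))))"
    then have i: "i < l" and j: "j < l" by auto
    have bj: "1 \<le> b ! j" using b1[OF j] .
    have "card (paths gstep (1, b ! j) (Suc (a ! i), Suc (a ! i))) = (b ! j - 1) choose (a ! i)"
    proof (cases "Suc (a ! i) \<le> b ! j")
      case True
      then show ?thesis by (simp add: gpaths_card)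
    next
      case False
      then have "b ! j - 1 < a ! i" using bj by linarith
      then show ?thesis using False by (simp add: gpaths_card)
    qed
    then show "mat l l (\<lambda>(i, j). int (card (paths gstep ((\<lambda>i. (1, b ! i)) j) ((\<lambda>j. (Suc (a ! j), Suc (a ! j))) i)))) $$ (i, j) =
      mat l l (\<lambda>(i, j). int ((b ! j - 1) choose (a ! i))) $$ (i, j)" using i j by simp
  qed auto
  ultimately show ?thesis by simp
qed

end


lemma dpart_partb: "T \<in> TSPP m \<Longrightarrow> partb m (dpart m T)"
  unfolding partb_def
proof (intro conjI allI impI)
  assume T: "T \<in> TSPP m"
  show "dpart m T 0 = 0" by (simp add: dpart_def)
  fix i j :: nat assume ij: "1 \<le> i \<and> i \<le> j"
  show "dpart m T j \<le> dpart m T i"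
  proof (cases "j \<le> m")
    case True
    have "T j j \<le> T i j" using tspp_pp[OF T] ij True unfolding plane_partition_box_def by auto
    also have "\<dots> \<le> T i i" using tspp_pp[OF T] ij True unfolding plane_partition_box_def by auto
    finally show ?thesis using ij True by (simp add: dpart_def)
  next
    case False then show ?thesis by (simp add: dpart_def)
  qed
next
  fix i assume "m < i" then show "dpart m T i = 0" by (simp add: dpart_def)
qed

lemma diag_eq: "diag_tspp m T = conj_part (dpart m T)"
proof
  fix k
  show "diag_tspp m T k = conj_part (dpart m T) k"
  proof (cases "k = 0")
    case True then show ?thesis by (simp add: diag_tspp_def conj_part_def)
  next
    case False
    have "{i. 1 \<le> i \<and> i \<le> m \<and> k \<le> T i i} = {i. 1 \<le> i \<and> k \<le> dpart m T i}"
    proof (rule Set.set_eqI)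
      fix i show "i \<in> {i. 1 \<le> i \<and> i \<le> m \<and> k \<le> T i i} \<longleftrightarrow> i \<in> {i. 1 \<le> i \<and> k \<le> dpart m T i}"
        using False by (auto simp: dpart_def)
    qed
    then show ?thesis using False by (simp add: diag_tspp_def conj_part_def)
  qed
qed

lemma pi_eq: "T \<in> TSPP m \<Longrightarrow> pi_tspp m T = from_frob (frob_b (dpart m T)) (map Suc (frob_a (dpart m T)))"
  unfolding pi_tspp_def Let_def diag_eq
  using frob_a_conj[OF dpart_partb] frob_b_conj[OF dpart_partb] by simp

theorem main_count:
  fixes n :: nat and lam :: "nat \<Rightarrow> nat"
  assumes "1 \<le> n" and mb: "modified_balanced n lam"
  shows "int (card {T \<in> TSPP (n - 1). pi_tspp (n - 1) T = lam}) =
    det (mat (length (frob_a lam)) (length (frob_a lam))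
      (\<lambda>(i, j). int ((frob_b lam ! j - 1) choose (frob_a lam ! i))))"
proof -
  let ?m = "n - 1" and ?a = "frob_a lam" and ?b = "frob_b lam" and ?l = "length (frob_a lam)"
  have mb': "(\<forall>i. (i = 0 \<or> n < i) \<longrightarrow> lam i = 0) \<and>
     (\<forall>i j. 1 \<le> i \<and> i \<le> j \<and> j \<le> n \<longrightarrow> lam j \<le> lam i) \<and>
     lam 1 \<le> n - 1 \<and>
     (\<forall>i. 1 \<le> i \<and> i \<le> lam i \<longrightarrow> lam i < conj_part lam i)"
    using mb unfolding modified_balanced_def .
  have z0: "\<forall>i. (i = 0 \<or> n < i) \<longrightarrow> lam i = 0" using mb' by (rule conjunct1)
  have dec0: "\<forall>i j. 1 \<le> i \<and> i \<le> j \<and> j \<le> n \<longrightarrow> lam j \<le> lam i" using mb' by (rule conjunct1[OF conjunct2])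
  have l1: "lam 1 \<le> n - 1" using mb' by (rule conjunct1[OF conjunct2[OF conjunct2]])
  have bal0: "\<forall>i. 1 \<le> i \<and> i \<le> lam i \<longrightarrow> lam i < conj_part lam i" using mb' by (rule conjunct2[OF conjunct2[OF conjunct2]])
  have z: "lam i = 0" if "i = 0 \<or> n < i" for i using z0[rule_format, OF that] .
  have dec: "lam j \<le> lam i" if "1 \<le> i" "i \<le> j" "j \<le> n" for i j
    by (rule dec0[rule_format]) (use that in simp)
  have bal: "lam i < conj_part lam i" if "1 \<le> i" "i \<le> lam i" for i
    by (rule bal0[rule_format]) (use that in simp)
  have P: "partb n lam"
    unfolding partb_def
  proof (intro conjI allI impI)
    show "lam 0 = 0" using z by simp
    fix i j :: nat assume ij: "1 \<le> i \<and> i \<le> j"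
    show "lam j \<le> lam i"
    proof (cases "j \<le> n")
      case True then show ?thesis using dec ij by simp
    next
      case False then show ?thesis using z by simp
    qed
  next
    fix i assume "n < i" then show "lam i = 0" using z by simp
  qed
  have la: "length ?a = ?l" by simp
  have lb: "length ?b = ?l" using frob_a_len[OF P] frob_b_len[OF P] by simp
  have ldur: "?l = durfee lam" using frob_a_len[OF P] .
  have ab: "?a ! k < ?b ! k" if k: "k < ?l" for k
  proof -
    have dk: "Suc k \<le> lam (Suc k)" using durfee_char[OF P, of "Suc k"] k ldur by simp
    have "lam (Suc k) < conj_part lam (Suc k)" using bal[of "Suc k"] dk by simp
    then show ?thesis using frob_a_nth[OF P, of k] frob_b_nth[OF P, of k] k ldur dk by simp
  qed
  have bnd: "?a ! 0 < ?m \<and> ?b ! 0 \<le> ?m" if "0 < ?l"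
  proof -
    have d1: "1 \<le> lam 1" using durfee_char[OF P, of 1] that ldur by simp
    have a0: "?a ! 0 = lam 1 - 1" using frob_a_nth[OF P, of 0] that ldur by simp
    have b0: "?b ! 0 = conj_part lam 1 - 1" using frob_b_nth[OF P, of 0] that ldur by simp
    have c1: "conj_part lam 1 \<le> n"
    proof (rule ccontr)
      assume "\<not> conj_part lam 1 \<le> n"
      then have "Suc n \<le> conj_part lam 1" by simp
      then have "1 \<le> lam (Suc n)" using galois[OF P, of "Suc n" 1] by simp
      then show False using z[of "Suc n"] by simp
    qed
    show ?thesis using a0 b0 d1 l1 c1 by (intro conjI) linarith+
  qed
  interpret S: setup9 ?m ?a ?b ?l
  proof (unfold_locales)
    show "length ?a = ?l" by (rule la)
    show "length ?b = ?l" by (rule lb)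
    show "sdec ?a" by (rule frob_a_sdec[OF P])
    show "sdec ?b" by (rule frob_b_sdec[OF P])
    show "\<And>k. k < ?l \<Longrightarrow> ?a ! k < ?b ! k" by (rule ab)
    show "0 < ?l \<Longrightarrow> ?a ! 0 < ?m \<and> ?b ! 0 \<le> ?m" by (rule bnd)
  qed
  have abk: "\<forall>k < length ?a. ?a ! k < ?b ! k" using ab by simp
  have "{T \<in> TSPP ?m. pi_tspp ?m T = lam} = S.ST"
  proof (rule Set.set_eqI)
    fix T
    show "T \<in> {T \<in> TSPP ?m. pi_tspp ?m T = lam} \<longleftrightarrow> T \<in> S.ST"
    proof (cases "T \<in> TSPP ?m")
      case False then show ?thesis unfolding S.ST_def by simp
    next
      case True
      have "pi_tspp ?m T = lam \<longleftrightarrow> dpart ?m T = from_frob (map (\<lambda>x. x - 1) ?b) ?a"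
        unfolding pi_eq[OF True] by (rule pi_equiv[OF dpart_partb[OF True] P abk])
      then show ?thesis using True unfolding S.ST_def S.d0_def S.b'_def by simp
    qed
  qed
  then show ?thesis using S.count_ST by simp
qed


theorem proposition2p2:
  fixes n :: nat and lam :: "nat \<Rightarrow> nat"
  assumes "1 \<le> n" and "modified_balanced n lam"
  shows "int (card {T \<in> TSPP (n - 1). pi_tspp (n - 1) T = lam}) =
    det (mat (length (frob_a lam)) (length (frob_a lam))
      (\<lambda>(i, j). int ((frob_b lam ! j - 1) choose (frob_a lam ! i))))"
    using main_count[OF assms] .

end
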